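(* Let $G$ be a commutative group, $d\ge 0$, and let $U\subset G$ be a $d$-dimensional quasicube. Then for every $V\subset U$ we have \[ \beta(V)=|V| \quad\text{and}\quad \alpha(V)\ge |V|^{1/2}. \] In particular $\beta(U)=2^d$ and $\alpha(U)\ge 2^{d/2}$.
   Context: All groups are commutative and written additively; sets $A,B$ below range over nonempty finite subsets of $G$. For a finite $U\subset G$: the induced doubling is $\alpha(U)=\inf_{A\supset U,\,B\supset U}\frac{|A+B|}{\sqrt{|A||B|}}$, and the induced tripling is $\beta(U)=\inf_{A,B}\frac{|A+B+U|}{\sqrt{|A||B|}}$ (infimum over all nonempty finite $A,B\subset G$). Quasicubes are defined recursively: a $0$-dimensional quasicube is any singleton; a finite set $U\subset G$ is a $d$-dimensional quasicube ($d\ge1$) if there is a proper subgroup $G'$ of $G$ and two distinct cosets $G'+x$, $G'+y$ such that $U\subset (G'+x)\cup(G'+y)$, both $U\cap(G'+x)$ and $U\cap(G'+y)$ are $(d-1)$-dimensional quasicubes, and $x-y$ has infinite order in the factor group $G/G'$. *)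

theory Defs
  imports Complex_Main
begin

text \<open>The ambient commutative group G is the type 'a of class ab_group_add (G = UNIV).\<close>

definition sumset :: "'a::ab_group_add set \<Rightarrow> 'a set \<Rightarrow> 'a set" where
  "sumset A B = {a + b | a b. a \<in> A \<and> b \<in> B}"

definition subgrp :: "'a::ab_group_add set \<Rightarrow> bool" where
  "subgrp H \<longleftrightarrow> 0 \<in> H \<and> (\<forall>x\<in>H. \<forall>y\<in>H. x + y \<in> H) \<and> (\<forall>x\<in>H. - x \<in> H)"

definition coset :: "'a::ab_group_add set \<Rightarrow> 'a \<Rightarrow> 'a set" where
  "coset H x = {h + x | h. h \<in> H}"

definition infinite_order_mod :: "'a::ab_group_add set \<Rightarrow> 'a \<Rightarrow> bool" where
  "infinite_order_mod H z \<longleftrightarrow> (\<forall>n::nat. n > 0 \<longrightarrow> (\<Sum>i<n. z) \<notin> H)"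

inductive quasicube :: "nat \<Rightarrow> 'a::ab_group_add set \<Rightarrow> bool" where
  qc0: "quasicube 0 {x}"
| qcSuc: "\<lbrakk> finite U; subgrp H; H \<noteq> UNIV; coset H x \<noteq> coset H y;
            U \<subseteq> coset H x \<union> coset H y;
            quasicube d (U \<inter> coset H x); quasicube d (U \<inter> coset H y);
            infinite_order_mod H (x - y) \<rbrakk> \<Longrightarrow> quasicube (Suc d) U"

definition alpha :: "'a::ab_group_add set \<Rightarrow> real" where
  "alpha U = Inf {real (card (sumset A B)) / sqrt (real (card A) * real (card B)) | A B.
                  finite A \<and> finite B \<and> A \<noteq> {} \<and> B \<noteq> {} \<and> U \<subseteq> A \<and> U \<subseteq> B}"

definition beta :: "'a::ab_group_add set \<Rightarrow> real" where
  "beta U = Inf {real (card (sumset (sumset A B) U)) / sqrt (real (card A) * real (card B)) | A B.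
                  finite A \<and> finite B \<and> A \<noteq> {} \<and> B \<noteq> {}}"

end

theory Submission
  imports Defs
begin

definition W01 :: "int set \<Rightarrow> int set \<Rightarrow> int set" where
  "W01 I J = {i + j |i j. i \<in> I \<and> j \<in> J} \<union> {i + j + 1 |i j. i \<in> I \<and> j \<in> J}"

lemma W01_mono: "I \<subseteq> I' \<Longrightarrow> W01 I J \<subseteq> W01 I' J"
  unfolding W01_def by blast

lemma finite_W01: "finite I \<Longrightarrow> finite J \<Longrightarrow> finite (W01 I J)"
proof -
  assume "finite I" "finite J"
  have "W01 I J = (\<lambda>(i,j). i + j) ` (I \<times> J) \<union> (\<lambda>(i,j). i + j + 1) ` (I \<times> J)"
    unfolding W01_def by auto
  thus ?thesis using \<open>finite I\<close> \<open>finite J\<close> by auto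
qed

lemma C1:
  fixes I J :: "int set"
  assumes "finite I" "finite J" "J \<noteq> {}"
  shows "I \<noteq> {} \<longrightarrow> card I + card J \<le> card (W01 I J)"
  using assms(1)
proof (induction I rule: finite_linorder_max_induct)
  show "{} \<noteq> {} \<longrightarrow> card {} + card J \<le> card (W01 {} J)" by simp
next
  fix b A assume 2: "finite A" "\<forall>a\<in>A. a < b" "A \<noteq> {} \<longrightarrow> card A + card J \<le> card (W01 A J)"

  define mJ where "mJ = Max J"
  have mJ: "mJ \<in> J" "\<forall>j\<in>J. j \<le> mJ" using assms(2,3) unfolding mJ_def by auto
  have fin: "finite (W01 (insert b A) J)" using 2 assms by (simp add: finite_W01)
  show "insert b A \<noteq> {} \<longrightarrow> card (insert b A) + card J \<le> card (W01 (insert b A) J)"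
  proof (cases "A = {}")
    case True
    have sub: "((+) b ` J) \<union> {b + mJ + 1} \<subseteq> W01 (insert b A) J"
      using mJ unfolding W01_def by auto
    have "b + mJ + 1 \<notin> (+) b ` J" using mJ by auto
    hence "card (((+) b ` J) \<union> {b + mJ + 1}) = card J + 1"
      using assms(2) by (simp add: card_image)
    hence "card J + 1 \<le> card (W01 (insert b A) J)"
      using card_mono[OF fin sub] by simp
    thus "insert b A \<noteq> {} \<longrightarrow> card (insert b A) + card J \<le> card (W01 (insert b A) J)" using True by simp
  next
    case False
    have sub: "W01 A J \<union> {b + mJ + 1} \<subseteq> W01 (insert b A) J"
      using mJ unfolding W01_def by auto
    have "b + mJ + 1 \<notin> W01 A J"
    proof
      assume "b + mJ + 1 \<in> W01 A J"
      then obtain i j where "i \<in> A" "j \<in> J" "b + mJ + 1 = i + j \<or> b + mJ + 1 = i + j + 1"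
        unfolding W01_def by auto
      moreover have "i < b" using 2 \<open>i \<in> A\<close> by auto
      moreover have "j \<le> mJ" using mJ \<open>j \<in> J\<close> by auto
      ultimately show False by auto
    qed
    hence "card (W01 A J \<union> {b + mJ + 1}) = card (W01 A J) + 1"
      using finite_W01[OF 2(1) assms(2)] by simp
    hence "card (W01 A J) + 1 \<le> card (W01 (insert b A) J)"
      using card_mono[OF fin sub] by simp
    moreover have "b \<notin> A" using 2 by auto
    ultimately show "insert b A \<noteq> {} \<longrightarrow> card (insert b A) + card J \<le> card (W01 (insert b A) J)" using 2 False by simp
  qed
qed

lemma lay:
  fixes a b r :: "int \<Rightarrow> real" and I J F :: "int set" and M :: real
  assumes "finite I" "finite J" "I \<noteq> {}" "J \<noteq> {}"
    "\<forall>i\<in>I. 0 < a i \<and> a i \<le> M" "\<exists>i\<in>I. a i = M"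
    "\<forall>j\<in>J. 0 < b j \<and> b j \<le> M" "\<exists>j\<in>J. b j = M"
    "\<forall>n. 0 \<le> r n" "\<forall>i\<in>I. \<forall>j\<in>J. min (a i) (b j) \<le> r (i+j)"
    "finite F" "W01 I J \<subseteq> F"
  shows "sum a I + sum b J \<le> (\<Sum>n\<in>F. max (r n) (r (n-1)))"
  using assms
proof (induction "card I + card J" arbitrary: I J a b r M rule: less_induct)
  case less
  note fI = less.prems(1) and fJ = less.prems(2) and neI = less.prems(3) and neJ = less.prems(4)
  define m where "m = Min (a ` I \<union> b ` J)"
  have fin_ab: "finite (a ` I \<union> b ` J)" using fI fJ by simp
  have m_in: "m \<in> a ` I \<union> b ` J" unfolding m_def using fin_ab neI by (intro Min_in) auto
  have m_le_a: "\<forall>i\<in>I. m \<le> a i" unfolding m_def using fin_ab by auto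
  have m_le_b: "\<forall>j\<in>J. m \<le> b j" unfolding m_def using fin_ab by auto
  have m_pos: "0 < m" using m_in less.prems(5,7) by auto
  have m_le_M: "m \<le> M" using m_in less.prems(5,7) by auto
  define I2 where "I2 = {i\<in>I. m < a i}"
  define J2 where "J2 = {j\<in>J. m < b j}"
  define a2 where "a2 = (\<lambda>i. a i - m)"
  define b2 where "b2 = (\<lambda>j. b j - m)"
  define r2 where "r2 = (\<lambda>n. max (r n - m) 0)"
  have sumA: "sum a I = sum a2 I2 + m * card I"
  proof -
    have "sum a2 I = sum a2 I2"
      unfolding I2_def a2_def using fI m_le_a
      by (intro sum.mono_neutral_right) auto
    moreover have "sum a2 I = sum a I - m * card I" unfolding a2_def by (simp add: sum_subtractf)
    ultimately show ?thesis by simp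
  qed
  have sumB: "sum b J = sum b2 J2 + m * card J"
  proof -
    have "sum b2 J = sum b2 J2"
      unfolding J2_def b2_def using fJ m_le_b
      by (intro sum.mono_neutral_right) auto
    moreover have "sum b2 J = sum b J - m * card J" unfolding b2_def by (simp add: sum_subtractf)
    ultimately show ?thesis by simp
  qed
  have point: "\<forall>n\<in>F. max (r2 n) (r2 (n-1)) + (if n \<in> W01 I J then m else 0) \<le> max (r n) (r (n-1))"
  proof
    fix n assume "n \<in> F"
    show "max (r2 n) (r2 (n-1)) + (if n \<in> W01 I J then m else 0) \<le> max (r n) (r (n-1))"
    proof (cases "n \<in> W01 I J")
      case True
      then obtain i j where ij: "i \<in> I" "j \<in> J" "n = i + j \<or> n = i + j + 1" unfolding W01_def by auto
      have "min (a i) (b j) \<le> r (i + j)" using less.prems(10) ij by auto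
      moreover have "m \<le> min (a i) (b j)" using m_le_a m_le_b ij by auto
      ultimately have "m \<le> max (r n) (r (n-1))" using ij by auto
      then show ?thesis using True less.prems(9) unfolding r2_def by (auto simp: max_def)
    next
      case False
      then show ?thesis using less.prems(9) m_pos unfolding r2_def by (auto simp: max_def)
    qed
  qed
  have sum_ind: "(\<Sum>n\<in>F. (if n \<in> W01 I J then m else 0)) = m * card (W01 I J)"
  proof -
    have "(\<Sum>n\<in>F. (if n \<in> W01 I J then m else 0)) = (\<Sum>n\<in>F \<inter> W01 I J. m)"
      using less.prems(11) by (simp add: sum.If_cases)
    also have "F \<inter> W01 I J = W01 I J" using less.prems(12) by auto
    finally show ?thesis by simp
  qed
  have cardW: "real (card I + card J) \<le> real (card (W01 I J))"
    using C1[OF fI fJ neJ] neI by simp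
  have IH_part: "sum a2 I2 + sum b2 J2 \<le> (\<Sum>n\<in>F. max (r2 n) (r2 (n-1)))"
  proof (cases "m = M")
    case True
    have "I2 = {}" unfolding I2_def using True less.prems(5) by auto
    moreover have "J2 = {}" unfolding J2_def using True less.prems(7) by auto
    moreover have "0 \<le> (\<Sum>n\<in>F. max (r2 n) (r2 (n-1)))"
      unfolding r2_def by (intro sum_nonneg) auto
    ultimately show ?thesis by simp
  next
    case False
    hence mM: "m < M" using m_le_M by simp
    obtain i0 where i0: "i0 \<in> I" "a i0 = M" using less.prems(6) by auto
    obtain j0 where j0: "j0 \<in> J" "b j0 = M" using less.prems(8) by auto
    have neI2: "I2 \<noteq> {}" using i0 mM unfolding I2_def by auto
    have neJ2: "J2 \<noteq> {}" using j0 mM unfolding J2_def by auto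
    have lt: "card I2 + card J2 < card I + card J"
    proof -
      have s1: "I2 \<subseteq> I" "J2 \<subseteq> J" unfolding I2_def J2_def by auto
      from m_in have "(\<exists>i\<in>I. a i = m) \<or> (\<exists>j\<in>J. b j = m)" by auto
      then show ?thesis
      proof
        assume "\<exists>i\<in>I. a i = m"
        then obtain i where "i \<in> I" "i \<notin> I2" unfolding I2_def by auto
        hence "I2 \<subset> I" using s1 by auto
        hence "card I2 < card I" using fI by (simp add: psubset_card_mono)
        moreover have "card J2 \<le> card J" using s1 fJ by (simp add: card_mono)
        ultimately show ?thesis by simp
      next
        assume "\<exists>j\<in>J. b j = m"
        then obtain j where "j \<in> J" "j \<notin> J2" unfolding J2_def by auto
        hence "J2 \<subset> J" using s1 by auto
        hence "card J2 < card J" using fJ by (simp add: psubset_card_mono)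
        moreover have "card I2 \<le> card I" using s1 fI by (simp add: card_mono)
        ultimately show ?thesis by simp
      qed
    qed
    show ?thesis
    proof (rule less.hyps[OF lt])
      show "finite I2" "finite J2" using fI fJ unfolding I2_def J2_def by auto
      show "I2 \<noteq> {}" "J2 \<noteq> {}" by (fact neI2, fact neJ2)
      show "\<forall>i\<in>I2. 0 < a2 i \<and> a2 i \<le> M - m" unfolding I2_def a2_def using less.prems(5) by auto
      show "\<exists>i\<in>I2. a2 i = M - m" using i0 mM unfolding I2_def a2_def by auto
      show "\<forall>j\<in>J2. 0 < b2 j \<and> b2 j \<le> M - m" unfolding J2_def b2_def using less.prems(7) by auto
      show "\<exists>j\<in>J2. b2 j = M - m" using j0 mM unfolding J2_def b2_def by auto
      show "\<forall>n. 0 \<le> r2 n" unfolding r2_def by auto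
      show "\<forall>i\<in>I2. \<forall>j\<in>J2. min (a2 i) (b2 j) \<le> r2 (i + j)"
      proof (intro ballI)
        fix i j assume "i \<in> I2" "j \<in> J2"
        hence "min (a i) (b j) \<le> r (i+j)" using less.prems(10) unfolding I2_def J2_def by auto
        thus "min (a2 i) (b2 j) \<le> r2 (i + j)" unfolding a2_def b2_def r2_def by (auto simp: min_def max_def)
      qed
      show "finite F" by (fact less.prems(11))
      show "W01 I2 J2 \<subseteq> F" using less.prems(12) unfolding W01_def I2_def J2_def by blast
    qed
  qed
  have "(\<Sum>n\<in>F. max (r2 n) (r2 (n-1))) + m * card (W01 I J) \<le> (\<Sum>n\<in>F. max (r n) (r (n-1)))"
  proof -
    have "(\<Sum>n\<in>F. max (r2 n) (r2 (n-1))) + m * card (W01 I J) =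
          (\<Sum>n\<in>F. max (r2 n) (r2 (n-1)) + (if n \<in> W01 I J then m else 0))"
      using sum_ind by (simp add: sum.distrib)
    also have "\<dots> \<le> (\<Sum>n\<in>F. max (r n) (r (n-1)))"
      using point by (intro sum_mono) auto
    finally show ?thesis .
  qed
  moreover have "m * (card I + card J) \<le> m * card (W01 I J)"
    using cardW m_pos by (intro mult_left_mono) auto
  ultimately show ?case using sumA sumB IH_part by (simp add: algebra_simps)
qed

lemma amgm2: "0 \<le> x \<Longrightarrow> 0 \<le> (y::real) \<Longrightarrow> 2 * sqrt (x * y) \<le> x + y"
proof -
  assume h: "0 \<le> x" "0 \<le> y"
  have "0 \<le> (sqrt x - sqrt y)^2" by simp
  also have "(sqrt x - sqrt y)^2 = x + y - 2 * sqrt (x * y)"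
    using h by (simp add: power2_diff real_sqrt_mult)
  finally show ?thesis by simp
qed

lemma sqrt_ge_min: "0 \<le> x \<Longrightarrow> 0 \<le> y \<Longrightarrow> min x y \<le> sqrt (x * y)"
proof -
  assume "0 \<le> x" "0 \<le> y"
  have "min x y * min x y \<le> x * y" using \<open>0 \<le> x\<close> \<open>0 \<le> y\<close>
    by (auto simp: min_def intro: mult_mono)
  hence "sqrt (min x y * min x y) \<le> sqrt (x * y)" by (rule real_sqrt_le_mono)
  thus ?thesis using \<open>0 \<le> x\<close> \<open>0 \<le> y\<close> by simp
qed

lemma E1:
  fixes a b p :: "int \<Rightarrow> real" and I J F :: "int set"
  assumes "finite I" "finite J" "I \<noteq> {}" "J \<noteq> {}"
    "\<forall>i\<in>I. 0 < a i" "\<forall>j\<in>J. 0 < b j"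
    "\<forall>n. 0 \<le> p n" "\<forall>i\<in>I. \<forall>j\<in>J. sqrt (a i * b j) \<le> p (i+j)"
    "finite F" "W01 I J \<subseteq> F"
  shows "2 * sqrt (sum a I * sum b J) \<le> (\<Sum>n\<in>F. max (p n) (p (n-1)))"
proof -
  define ma where "ma = Max (a ` I)"
  define mb where "mb = Max (b ` J)"
  have ma_in: "ma \<in> a ` I" unfolding ma_def using assms by auto
  have mb_in: "mb \<in> b ` J" unfolding mb_def using assms by auto
  have ma_ge: "\<forall>i\<in>I. a i \<le> ma" unfolding ma_def using assms by auto
  have mb_ge: "\<forall>j\<in>J. b j \<le> mb" unfolding mb_def using assms by auto
  have ma_pos: "0 < ma" using ma_in assms by auto
  have mb_pos: "0 < mb" using mb_in assms by auto
  define \<mu> where "\<mu> = sqrt (ma * mb)"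
  have mu_pos: "0 < \<mu>" unfolding \<mu>_def using ma_pos mb_pos by simp
  define a' where "a' = (\<lambda>i. a i / ma)"
  define b' where "b' = (\<lambda>j. b j / mb)"
  define r where "r = (\<lambda>n. p n / \<mu>)"
  have L: "sum a' I + sum b' J \<le> (\<Sum>n\<in>F. max (r n) (r (n-1)))"
  proof (rule lay[where M=1])
    show "finite I" "finite J" "I \<noteq> {}" "J \<noteq> {}" "finite F" "W01 I J \<subseteq> F" using assms by auto
    show "\<forall>i\<in>I. 0 < a' i \<and> a' i \<le> 1" unfolding a'_def using assms ma_ge ma_pos by auto
    show "\<exists>i\<in>I. a' i = 1" unfolding a'_def using ma_in ma_pos by auto
    show "\<forall>j\<in>J. 0 < b' j \<and> b' j \<le> 1" unfolding b'_def using assms mb_ge mb_pos by auto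
    show "\<exists>j\<in>J. b' j = 1" unfolding b'_def using mb_in mb_pos by auto
    show "\<forall>n. 0 \<le> r n" unfolding r_def using assms mu_pos by auto
    show "\<forall>i\<in>I. \<forall>j\<in>J. min (a' i) (b' j) \<le> r (i + j)"
    proof (intro ballI)
      fix i j assume ij: "i \<in> I" "j \<in> J"
      have "min (a' i) (b' j) \<le> sqrt (a' i * b' j)"
        using ij assms ma_pos mb_pos unfolding a'_def b'_def by (intro sqrt_ge_min) auto
      also have "sqrt (a' i * b' j) = sqrt (a i * b j) / \<mu>"
        unfolding a'_def b'_def \<mu>_def by (simp add: real_sqrt_divide real_sqrt_mult)
      also have "\<dots> \<le> p (i+j) / \<mu>" using assms ij mu_pos by (simp add: divide_right_mono)
      finally show "min (a' i) (b' j) \<le> r (i + j)" unfolding r_def .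
    qed
  qed
  have sa: "sum a' I = sum a I / ma" unfolding a'_def by (simp add: sum_divide_distrib)
  have sb: "sum b' J = sum b J / mb" unfolding b'_def by (simp add: sum_divide_distrib)
  have sr: "(\<Sum>n\<in>F. max (r n) (r (n-1))) = (\<Sum>n\<in>F. max (p n) (p (n-1))) / \<mu>"
    unfolding r_def using mu_pos by (simp add: sum_divide_distrib max_divide_distrib_right)
  define A where "A = sum a I"
  define B where "B = sum b J"
  have A_pos: "0 < A" unfolding A_def using assms by (intro sum_pos) auto
  have B_pos: "0 < B" unfolding B_def using assms by (intro sum_pos) auto
  have key: "\<mu> * (A / ma + B / mb) \<le> (\<Sum>n\<in>F. max (p n) (p (n-1)))"
    using L sa sb sr mu_pos unfolding A_def B_def by (simp add: field_simps)
  have amgm: "2 * sqrt (A * B) \<le> \<mu> * (A / ma + B / mb)"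
  proof -
    have "2 * sqrt ((A/ma) * (B/mb)) \<le> A / ma + B / mb"
      using A_pos B_pos ma_pos mb_pos by (intro amgm2) auto
    hence "\<mu> * (2 * sqrt ((A/ma) * (B/mb))) \<le> \<mu> * (A / ma + B / mb)"
      using mu_pos by (intro mult_left_mono) auto
    moreover have "\<mu> * sqrt ((A/ma) * (B/mb)) = sqrt (A * B)"
    proof -
      have "\<mu> * sqrt ((A/ma) * (B/mb)) = sqrt ((ma * mb) * ((A/ma) * (B/mb)))"
        unfolding \<mu>_def by (rule real_sqrt_mult[symmetric])
      also have "(ma * mb) * ((A/ma) * (B/mb)) = A * B" using ma_pos mb_pos by simp
      finally show ?thesis .
    qed
    ultimately show ?thesis by (simp add: algebra_simps)
  qed
  show ?thesis using key amgm unfolding A_def B_def by simp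
qed

lemma dm_div: "0 \<le> u \<Longrightarrow> u < K \<Longrightarrow> (K * n + u) div K = (n::int)"
  by (simp add: div_add_self1 ac_simps)
lemma dm_mod: "0 \<le> u \<Longrightarrow> u < K \<Longrightarrow> (K * n + u) mod K = (u::int)"
  by (simp add: ac_simps)
lemma dmk: "t < k \<Longrightarrow> (int k * i + int t) div int k = i \<and> (int k * i + int t) mod int k = int t"
proof
  assume "t < k"
  show "(int k * i + int t) div int k = i" by (rule dm_div) (use \<open>t < k\<close> in auto)
  show "(int k * i + int t) mod int k = int t" by (rule dm_mod) (use \<open>t < k\<close> in auto)
qed
lemma emb_inj: "inj_on (\<lambda>(i::int, t::nat). int k * i + int t) (X \<times> {..<k})"
proof (rule inj_onI)
  fix x y assume "x \<in> X \<times> {..<k}" "y \<in> X \<times> {..<k}"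
    "(\<lambda>(i::int, t::nat). int k * i + int t) x = (\<lambda>(i::int, t::nat). int k * i + int t) y"
  moreover obtain i t where "x = (i,t)" by force
  moreover obtain i' t' where "y = (i',t')" by force
  ultimately have h: "t < k" "t' < k" "int k * i + int t = int k * i' + int t'" by auto
  have "i = i' \<and> t = t'" using dmk[OF h(1), of i] dmk[OF h(2), of i'] h(3) by simp
  thus "x = y" using \<open>x = (i,t)\<close> \<open>y = (i',t')\<close> by simp
qed

lemma sum_emb:
  fixes g :: "int \<Rightarrow> real"
  shows "(\<Sum>m\<in>(\<lambda>(i, t). int k * i + int t) ` (X \<times> {..<k}). g m) =
         (\<Sum>i\<in>X. \<Sum>t<k. g (int k * i + int t))"
proof -
  have "(\<Sum>m\<in>(\<lambda>(i, t). int k * i + int t) ` (X \<times> {..<k}). g m) =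
        (\<Sum>x\<in>X \<times> {..<k}. g ((\<lambda>(i, t). int k * i + int t) x))"
    by (rule sum.reindex[OF emb_inj, unfolded comp_def])
  also have "\<dots> = (\<Sum>(i,t)\<in>X \<times> {..<k}. g (int k * i + int t))"
    by (intro sum.cong) auto
  also have "\<dots> = (\<Sum>i\<in>X. \<Sum>t<k. g (int k * i + int t))"
    by (rule sum.cartesian_product[symmetric])
  finally show ?thesis .
qed

lemma refine:
  fixes a b s :: "int \<Rightarrow> real" and I J F :: "int set" and c0 c1 r :: real and k :: nat
  assumes fI: "finite I" and fJ: "finite J" and neI: "I \<noteq> {}" and neJ: "J \<noteq> {}"
    and apos: "\<forall>i\<in>I. 0 < a i" and bpos: "\<forall>j\<in>J. 0 < b j"
    and snn: "\<forall>n. 0 \<le> s n" and s0: "\<forall>n. n \<notin> F \<longrightarrow> s n = 0" and c0: "0 < c0" and c1: "0 < c1"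
    and h0: "\<forall>i\<in>I. \<forall>j\<in>J. c0 * sqrt (a i * b j) \<le> s (i+j)"
    and h1: "\<forall>i\<in>I. \<forall>j\<in>J. c1 * sqrt (a i * b j) \<le> s (i+j+1)"
    and fF: "finite F" and WF: "W01 I J \<subseteq> F"
    and kpos: "0 < k" and rpos: "0 < r" and rk: "r ^ k = c1 / c0"
  shows "2 * sqrt (sum a I * sum b J) * (\<Sum>t<k. r^(2*t))
         \<le> (max 1 (1/r) * (\<Sum>u<k. r^u) + r^(k-1)) * sum s F / c0"
proof -
  define K where "K = int k"
  have Kpos: "0 < K" unfolding K_def using kpos by simp
  define emb where "emb = (\<lambda>(i::int, t::nat). K * i + int t)"
  define a' where "a' = (\<lambda>m. a (m div K) * r^(2 * nat (m mod K)))"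
  define b' where "b' = (\<lambda>m. b (m div K) * r^(2 * nat (m mod K)))"
  define p' where "p' = (\<lambda>m. r^(nat (m mod K)) * s (m div K) / c0)"
  define I' where "I' = emb ` (I \<times> {..<k})"
  define J' where "J' = emb ` (J \<times> {..<k})"
  define F' where "F' = emb ` (F \<times> {..<k})"
  have dm: "\<And>i t. t < k \<Longrightarrow> (K * i + int t) div K = i \<and> (K * i + int t) mod K = int t"
    unfolding K_def by (rule dmk)
  have a'e: "\<And>i t. t < k \<Longrightarrow> a' (K * i + int t) = a i * r^(2*t)"
    unfolding a'_def using dm by simp
  have b'e: "\<And>i t. t < k \<Longrightarrow> b' (K * i + int t) = b i * r^(2*t)"
    unfolding b'_def using dm by simp
  have p'e: "\<And>i t. t < k \<Longrightarrow> p' (K * i + int t) = r^t * s i / c0"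
    unfolding p'_def using dm by simp
  have E: "2 * sqrt (sum a' I' * sum b' J') \<le> (\<Sum>m\<in>F'. max (p' m) (p' (m-1)))"
  proof (rule E1)
    show "finite I'" "finite J'" "finite F'" unfolding I'_def J'_def F'_def using fI fJ fF by auto
    show "I' \<noteq> {}" "J' \<noteq> {}" unfolding I'_def J'_def using neI neJ kpos by auto
    show "\<forall>i\<in>I'. 0 < a' i" unfolding I'_def emb_def using a'e apos rpos by auto
    show "\<forall>j\<in>J'. 0 < b' j" unfolding J'_def emb_def using b'e bpos rpos by auto
    show "\<forall>n. 0 \<le> p' n" unfolding p'_def using snn rpos c0 by auto
    show "\<forall>i\<in>I'. \<forall>j\<in>J'. sqrt (a' i * b' j) \<le> p' (i + j)"
    proof (intro ballI)
      fix m1 m2 assume "m1 \<in> I'" "m2 \<in> J'"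
      then obtain i t j t' where it: "i \<in> I" "t < k" "m1 = K * i + int t"
        and jt: "j \<in> J" "t' < k" "m2 = K * j + int t'"
        unfolding I'_def J'_def emb_def by auto
      have sq: "sqrt (a' m1 * b' m2) = r^(t+t') * sqrt (a i * b j)"
      proof -
        have A1: "a' m1 = a i * r^(2*t)" unfolding it(3) by (rule a'e[OF it(2)])
        have B1: "b' m2 = b j * r^(2*t')" unfolding jt(3) by (rule b'e[OF jt(2)])
        have "(r^(t+t'))^2 = r^(2*t) * r^(2*t')"
          by (simp add: power_add power_mult[symmetric] power_mult_distrib ac_simps)
        hence "a' m1 * b' m2 = (r^(t+t'))^2 * (a i * b j)"
          using A1 B1 by (simp add: ac_simps)
        thus ?thesis using rpos by (simp add: real_sqrt_mult)
      qed
      show "sqrt (a' m1 * b' m2) \<le> p' (m1 + m2)"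
      proof (cases "t + t' < k")
        case True
        have eq: "m1 + m2 = K * (i + j) + int (t + t')" using it jt by (simp add: algebra_simps)
        have "p' (m1 + m2) = r^(t+t') * s (i+j) / c0" unfolding eq by (rule p'e[OF True])
        moreover have "sqrt (a i * b j) \<le> s (i+j) / c0" using h0 it jt c0 by (simp add: field_simps)
        hence "r^(t+t') * sqrt (a i * b j) \<le> r^(t+t') * (s (i+j) / c0)"
          using rpos by (intro mult_left_mono) auto
        ultimately show ?thesis using sq by simp
      next
        case False
        have eq: "m1 + m2 = K * (i + j + 1) + int (t + t' - k)" using it jt False unfolding K_def
          by (simp add: algebra_simps of_nat_diff)
        have lt: "t + t' - k < k" using it jt by simp
        have "p' (m1 + m2) = r^(t+t'-k) * s (i+j+1) / c0" unfolding eq by (rule p'e[OF lt])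
        moreover have "c1 * sqrt (a i * b j) \<le> s (i+j+1)" using h1 it jt by auto
        hence "(c1 / c0) * sqrt (a i * b j) \<le> s (i+j+1) / c0" using c0 by (simp add: field_simps)
        hence "r^(t+t'-k) * ((c1 / c0) * sqrt (a i * b j)) \<le> r^(t+t'-k) * (s (i+j+1) / c0)"
          using rpos by (intro mult_left_mono) auto
        moreover have "r^(t+t') = r^(t+t'-k) * (c1 / c0)" using rk False
          by (metis le_add_diff_inverse2 not_less power_add)
        ultimately show ?thesis using sq by (simp add: ac_simps)
      qed
    qed
    show "W01 I' J' \<subseteq> F'"
    proof
      fix m assume "m \<in> W01 I' J'"
      then obtain m1 m2 where mm: "m1 \<in> I'" "m2 \<in> J'" "m = m1 + m2 \<or> m = m1 + m2 + 1"
        unfolding W01_def by auto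
      then obtain i t j t' where it: "i \<in> I" "t < k" "m1 = K * i + int t"
        and jt: "j \<in> J" "t' < k" "m2 = K * j + int t'"
        unfolding I'_def J'_def emb_def by auto
      have inF: "i + j \<in> F" "i + j + 1 \<in> F" using WF it jt unfolding W01_def by auto
      have "\<exists>v. (v = t + t' \<or> v = t + t' + 1) \<and> m = K * (i+j) + int v"
      proof (cases "m = m1 + m2")
        case True
        then show ?thesis using it jt by (intro exI[of _ "t+t'"]) (simp add: algebra_simps)
      next
        case False
        then have "m = m1 + m2 + 1" using mm(3) by auto
        then show ?thesis using it jt by (intro exI[of _ "t+t'+1"]) (simp add: algebra_simps)
      qed
      then obtain v where v: "v = t + t' \<or> v = t + t' + 1" "m = K * (i+j) + int v" by blast
      show "m \<in> F'"
      proof (cases "v < k")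
        case True
        thus ?thesis using v inF unfolding F'_def emb_def by force
      next
        case False
        have "m = K * (i+j+1) + int (v - k)" using v False unfolding K_def
          by (simp add: algebra_simps of_nat_diff)
        moreover have "v - k < k" using v it jt by auto
        ultimately show ?thesis using inF unfolding F'_def emb_def by force
      qed
    qed
  qed
  define N where "N = (\<Sum>t<k. r^(2*t))"
  define X where "X = (\<Sum>u<k. r^u)"
  define \<rho> where "\<rho> = max 1 (1/r)"
  have Npos: "0 < N" unfolding N_def using kpos rpos by (intro sum_pos) auto
  have sumI': "sum a' I' = sum a I * N"
  proof -
    have "sum a' I' = (\<Sum>i\<in>I. \<Sum>t<k. a' (int k * i + int t))"
      unfolding I'_def emb_def K_def by (rule sum_emb)
    also have "\<dots> = (\<Sum>i\<in>I. a i * N)" unfolding N_def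
      using a'e unfolding K_def by (simp add: sum_distrib_left)
    finally show ?thesis by (simp add: sum_distrib_right)
  qed
  have sumJ': "sum b' J' = sum b J * N"
  proof -
    have "sum b' J' = (\<Sum>i\<in>J. \<Sum>t<k. b' (int k * i + int t))"
      unfolding J'_def emb_def K_def by (rule sum_emb)
    also have "\<dots> = (\<Sum>i\<in>J. b i * N)" unfolding N_def
      using b'e unfolding K_def by (simp add: sum_distrib_left)
    finally show ?thesis by (simp add: sum_distrib_right)
  qed
  have lhs: "sqrt (sum a' I' * sum b' J') = sqrt (sum a I * sum b J) * N"
  proof -
    have "sum a' I' * sum b' J' = (sum a I * sum b J) * N^2" using sumI' sumJ'
      by (simp add: power2_eq_square ac_simps)
    thus ?thesis using Npos by (simp add: real_sqrt_mult)
  qed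
  have point: "\<And>n u. u < k \<Longrightarrow> max (p' (K * n + int u)) (p' (K * n + int u - 1))
      \<le> \<rho> * r^u * s n / c0 + (if u = 0 then r^(k-1) * s (n-1) / c0 else 0)"
  proof -
    fix n u assume u: "u < k"
    have rho1: "1 \<le> \<rho>" unfolding \<rho>_def by simp
    have rho2: "1 / r \<le> \<rho>" unfolding \<rho>_def by simp
    have sn: "0 \<le> s n / c0" using snn c0 by simp
    have A: "p' (K * n + int u) = r^u * s n / c0" using p'e u by simp
    show "max (p' (K * n + int u)) (p' (K * n + int u - 1))
      \<le> \<rho> * r^u * s n / c0 + (if u = 0 then r^(k-1) * s (n-1) / c0 else 0)"
    proof (cases "u = 0")
      case True
      have eq: "K * n + int u - 1 = K * (n - 1) + int (k - 1)" using True kpos unfolding K_def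
        by (simp add: algebra_simps of_nat_diff)
      have lt: "k - 1 < k" using kpos by simp
      have B: "p' (K * n + int u - 1) = r^(k-1) * s (n-1) / c0" unfolding eq by (rule p'e[OF lt])
      have "0 \<le> r^(k-1) * s (n-1) / c0" using snn rpos c0 by simp
      moreover have "r^u * s n / c0 \<le> \<rho> * r^u * s n / c0"
      proof -
        have "1 * (s n / c0) \<le> \<rho> * (s n / c0)" using rho1 sn by (rule mult_right_mono)
        thus ?thesis using True by simp
      qed
      moreover have "0 \<le> r^u * s n / c0" using snn c0 rpos by (intro divide_nonneg_pos mult_nonneg_nonneg) auto
      ultimately show ?thesis using A B True by (simp add: max_def)
    next
      case False
      have eq: "K * n + int u - 1 = K * n + int (u - 1)" using False by (simp add: of_nat_diff)
      have lt: "u - 1 < k" using u by simp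
      have B: "p' (K * n + int u - 1) = r^(u-1) * s n / c0" unfolding eq by (rule p'e[OF lt])
      have "r^(u-1) = r^u * (1/r)" using False rpos
        by (metis Suc_pred' bot_nat_0.not_eq_extremum divide_self_if mult.commute
              nonzero_mult_div_cancel_left power_Suc times_divide_eq_right rpos less_irrefl)
      moreover have "r^u * (1/r) \<le> r^u * \<rho>" using rho2 rpos by (intro mult_left_mono) auto
      ultimately have "r^(u-1) \<le> r^u * \<rho>" by simp
      hence "r^(u-1) * (s n / c0) \<le> (\<rho> * r^u) * (s n / c0)"
        by (intro mult_right_mono[OF _ sn]) (simp add: ac_simps)
      moreover have "r^u * (s n / c0) \<le> (\<rho> * r^u) * (s n / c0)" using sn rho1 rpos
        by (intro mult_right_mono) (auto simp: mult_le_cancel_right1)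
      ultimately show ?thesis using A B False by (simp add: max_def)
    qed
  qed
  have shift: "(\<Sum>n\<in>F. s (n-1)) \<le> sum s F"
  proof -
    have "(\<Sum>n\<in>F. s (n-1)) = (\<Sum>m\<in>(\<lambda>n. n - 1) ` F. s m)"
      by (simp add: sum.reindex inj_on_def)
    also have "\<dots> = (\<Sum>m\<in>(\<lambda>n. n - 1) ` F. if m \<in> F then s m else 0)"
      using s0 by (intro sum.cong) auto
    also have "\<dots> = (\<Sum>m\<in>(\<lambda>n. n - 1) ` F \<inter> F. s m)"
      using fF by (simp add: sum.inter_restrict)
    also have "\<dots> \<le> sum s F" using fF snn by (intro sum_mono2) auto
    finally show ?thesis .
  qed
  have R: "(\<Sum>m\<in>F'. max (p' m) (p' (m-1))) \<le> (\<rho> * X + r^(k-1)) * sum s F / c0"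
  proof -
    have "(\<Sum>m\<in>F'. max (p' m) (p' (m-1))) = (\<Sum>n\<in>F. \<Sum>u<k. max (p' (K * n + int u)) (p' (K * n + int u - 1)))"
      unfolding F'_def emb_def K_def by (rule sum_emb)
    also have "\<dots> \<le> (\<Sum>n\<in>F. \<Sum>u<k. \<rho> * r^u * s n / c0 + (if u = 0 then r^(k-1) * s (n-1) / c0 else 0))"
      using point by (intro sum_mono) auto
    also have "\<dots> = (\<Sum>n\<in>F. \<rho> * X * s n / c0 + r^(k-1) * s (n-1) / c0)"
    proof (rule sum.cong[OF refl])
      fix n
      have "(\<Sum>u<k. \<rho> * r^u * s n / c0 + (if u = 0 then r^(k-1) * s (n-1) / c0 else 0))
          = (\<Sum>u<k. \<rho> * r^u * s n / c0) + (\<Sum>u<k. (if u = 0 then r^(k-1) * s (n-1) / c0 else 0))"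
        by (rule sum.distrib)
      also have "(\<Sum>u<k. \<rho> * r^u * s n / c0) = \<rho> * X * s n / c0"
        unfolding X_def by (simp add: sum_distrib_left sum_distrib_right sum_divide_distrib ac_simps)
      also have "(\<Sum>u<k. (if u = 0 then r^(k-1) * s (n-1) / c0 else 0)) = r^(k-1) * s (n-1) / c0"
        using kpos by (simp add: sum.delta)
      finally show "(\<Sum>u<k. \<rho> * r^u * s n / c0 + (if u = 0 then r^(k-1) * s (n-1) / c0 else 0))
          = \<rho> * X * s n / c0 + r^(k-1) * s (n-1) / c0" .
    qed
    also have "\<dots> = \<rho> * X * sum s F / c0 + r^(k-1) * (\<Sum>n\<in>F. s (n-1)) / c0"
      by (simp add: sum.distrib sum_distrib_left sum_divide_distrib)
    also have "\<dots> \<le> \<rho> * X * sum s F / c0 + r^(k-1) * sum s F / c0"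
      using shift rpos c0 by (simp add: divide_right_mono mult_left_mono)
    also have "\<dots> = (\<rho> * X + r^(k-1)) * sum s F / c0" by (simp add: algebra_simps add_divide_distrib)
    finally show ?thesis .
  qed
  show ?thesis using E lhs R unfolding N_def X_def \<rho>_def by (simp add: ac_simps)
qed

lemma geo_split: "(\<Sum>u<k+m. (r::real)^u) = (\<Sum>u<k. r^u) + r^k * (\<Sum>u<m. r^u)"
  by (induction m) (auto simp: power_add ring_distribs)

lemma geo_even: "(\<Sum>t<k. (r::real)^(2*t)) * (1 + r) = (\<Sum>u<2*k. r^u)"
proof (induction k)
  case 0 then show ?case by simp
next
  case (Suc k)
  have "(\<Sum>t<Suc k. r^(2*t)) * (1 + r) = (\<Sum>t<k. r^(2*t)) * (1 + r) + r^(2*k) + r^(2*k+1)"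
    by (simp add: ring_distribs)
  also have "\<dots> = (\<Sum>u<2*k. r^u) + r^(2*k) + r^(2*k+1)" using Suc by simp
  also have "\<dots> = (\<Sum>u<2*Suc k. r^u)" by simp
  finally show ?case .
qed

lemma geo_NX: "(\<Sum>t<k. (r::real)^(2*t)) * (1 + r) = (\<Sum>u<k. r^u) * (1 + r^k)"
proof -
  have "(\<Sum>u<2*k. r^u) = (\<Sum>u<k+k. r^u)" by (simp add: mult_2)
  also have "\<dots> = (\<Sum>u<k. r^u) * (1 + r^k)" by (simp add: geo_split ring_distribs ac_simps)
  finally show ?thesis using geo_even by simp
qed

lemma W1:
  fixes a b s :: "int \<Rightarrow> real" and I J F :: "int set" and c0 c1 :: real
  assumes fI: "finite I" and fJ: "finite J" and neI: "I \<noteq> {}" and neJ: "J \<noteq> {}"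
    and apos: "\<forall>i\<in>I. 0 < a i" and bpos: "\<forall>j\<in>J. 0 < b j"
    and snn: "\<forall>n. 0 \<le> s n" and s0: "\<forall>n. n \<notin> F \<longrightarrow> s n = 0" and c0: "0 < c0" and c1: "0 < c1"
    and h0: "\<forall>i\<in>I. \<forall>j\<in>J. c0 * sqrt (a i * b j) \<le> s (i+j)"
    and h1: "\<forall>i\<in>I. \<forall>j\<in>J. c1 * sqrt (a i * b j) \<le> s (i+j+1)"
    and fF: "finite F" and WF: "W01 I J \<subseteq> F"
  shows "(c0 + c1) * sqrt (sum a I * sum b J) \<le> sum s F"
proof -
  define \<gamma> where "\<gamma> = c1 / c0"
  have gpos: "0 < \<gamma>" unfolding \<gamma>_def using c0 c1 by simp
  define \<sigma> where "\<sigma> = sqrt (sum a I * sum b J)"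
  have sig: "0 \<le> \<sigma>" unfolding \<sigma>_def using apos bpos
    by (simp add: sum_nonneg less_imp_le)
  define S where "S = sum s F"
  have Snn: "0 \<le> S" unfolding S_def using snn by (simp add: sum_nonneg)
  define m0 where "m0 = min 1 \<gamma>"
  have m0pos: "0 < m0" unfolding m0_def using gpos by simp
  define rr where "rr = (\<lambda>k::nat. \<gamma> powr (1 / real k))"
  define g where "g = (\<lambda>k::nat. 2 * \<sigma> * (\<gamma> + 1) /
      ((rr k + 1) * (max 1 (1 / rr k) + (\<gamma> / rr k) / (real k * m0))))"
  have bound: "g k \<le> S / c0" if kpos: "0 < k" for k
  proof -
    define r where "r = rr k"
    have rpos: "0 < r" unfolding r_def rr_def using gpos by simp
    have rk: "r ^ k = \<gamma>" unfolding r_def rr_def using gpos kpos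
      by (simp add: powr_realpow[symmetric] powr_powr)
    define N where "N = (\<Sum>t<k. r^(2*t))"
    define X where "X = (\<Sum>u<k. r^u)"
    define \<rho> where "\<rho> = max 1 (1/r)"
    have ref: "2 * \<sigma> * N \<le> (\<rho> * X + r^(k-1)) * S / c0"
      unfolding \<sigma>_def N_def X_def \<rho>_def S_def
      by (rule refine[OF fI fJ neI neJ apos bpos snn s0 c0 c1 h0 h1 fF WF kpos rpos rk[unfolded \<gamma>_def]])
    have NX: "N * (1 + r) = X * (1 + \<gamma>)" unfolding N_def X_def using geo_NX rk by simp
    have Xge: "real k * m0 \<le> X"
    proof -
      have "\<forall>u\<in>{..<k}. m0 \<le> r^u"
      proof
        fix u assume "u \<in> {..<k}"
        hence u: "u \<le> k" by simp
        show "m0 \<le> r^u"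
        proof (cases "1 \<le> r")
          case True
          hence "1 \<le> r^u" by (rule one_le_power)
          thus ?thesis unfolding m0_def by simp
        next
          case False
          hence "r^k \<le> r^u" using rpos u by (intro power_decreasing) auto
          thus ?thesis unfolding m0_def using rk by simp
        qed
      qed
      hence "(\<Sum>u<k. m0) \<le> X" unfolding X_def by (intro sum_mono) auto
      thus ?thesis by simp
    qed
    have Xpos: "0 < X" using Xge m0pos kpos by (smt (verit) of_nat_0_less_iff mult_pos_pos)
    have rk1: "r^(k-1) = \<gamma> / r"
    proof -
      have "r^k = r * r^(k-1)" using kpos by (metis Suc_diff_1 power_Suc)
      thus ?thesis using rk rpos by (simp add: field_simps)
    qed
    have step1: "2 * \<sigma> * (\<gamma> + 1) / (r + 1) \<le> (\<rho> + (\<gamma> / r) / X) * (S / c0)"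
    proof -
      have e1: "N = X * (1 + \<gamma>) / (1 + r)" using NX rpos by (simp add: field_simps)
      have "2 * \<sigma> * (X * (1 + \<gamma>) / (1 + r)) \<le> (\<rho> * X + \<gamma> / r) * S / c0"
        using ref by (simp only: e1 rk1)
      hence "X * (2 * \<sigma> * (\<gamma> + 1) / (r + 1)) \<le> X * ((\<rho> + (\<gamma> / r) / X) * (S / c0))"
        using Xpos by (simp add: field_simps)
      thus ?thesis by (rule mult_left_le_imp_le[OF _ Xpos])
    qed
    have step2: "(\<rho> + (\<gamma> / r) / X) * (S / c0) \<le> (\<rho> + (\<gamma> / r) / (real k * m0)) * (S / c0)"
    proof (rule mult_right_mono)
      show "0 \<le> S / c0" using Snn c0 by simp
      have "(\<gamma> / r) / X \<le> (\<gamma> / r) / (real k * m0)"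
        using Xge gpos rpos m0pos kpos Xpos by (intro divide_left_mono) auto
      thus "\<rho> + (\<gamma> / r) / X \<le> \<rho> + (\<gamma> / r) / (real k * m0)" by simp
    qed
    have dpos: "0 < (r + 1) * (\<rho> + (\<gamma> / r) / (real k * m0))"
      unfolding \<rho>_def using rpos gpos m0pos kpos by (intro mult_pos_pos add_pos_nonneg) auto
    have "2 * \<sigma> * (\<gamma> + 1) / (r + 1) \<le> (\<rho> + (\<gamma> / r) / (real k * m0)) * (S / c0)"
      using step1 step2 by linarith
    hence "2 * \<sigma> * (\<gamma> + 1) / ((r + 1) * (\<rho> + (\<gamma> / r) / (real k * m0))) \<le> S / c0"
      using dpos rpos by (simp add: field_simps)
    thus ?thesis unfolding g_def r_def[symmetric] \<rho>_def .
  qed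
  have lim_r: "rr \<longlonglongrightarrow> 1"
  proof -
    have "(\<lambda>k. 1 / real k) \<longlonglongrightarrow> 0" by (simp add: lim_const_over_n)
    hence "(\<lambda>k. \<gamma> powr (1 / real k)) \<longlonglongrightarrow> \<gamma> powr 0"
      using gpos by (intro tendsto_intros) auto
    thus ?thesis unfolding rr_def using gpos by simp
  qed
  have lim_g: "g \<longlonglongrightarrow> 2 * \<sigma> * (\<gamma> + 1) / ((1 + 1) * (max 1 (1 / 1) + 0))"
  proof -
    have l1: "(\<lambda>k. (\<gamma> / rr k) / (real k * m0)) \<longlonglongrightarrow> 0"
    proof -
      have "(\<lambda>k. \<gamma> / rr k) \<longlonglongrightarrow> \<gamma> / 1" using lim_r by (intro tendsto_intros) auto
      moreover have "(\<lambda>k. 1 / (real k * m0)) \<longlonglongrightarrow> 0"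
      proof -
        have "(\<lambda>k. (1 / m0) * (1 / real k)) \<longlonglongrightarrow> (1 / m0) * 0"
          by (intro tendsto_intros lim_const_over_n)
        thus ?thesis by (simp add: field_simps)
      qed
      ultimately have "(\<lambda>k. (\<gamma> / rr k) * (1 / (real k * m0))) \<longlonglongrightarrow> (\<gamma> / 1) * 0"
        by (rule tendsto_mult)
      thus ?thesis by simp
    qed
    show ?thesis unfolding g_def using lim_r l1 by (intro tendsto_intros) auto
  qed
  have "2 * \<sigma> * (\<gamma> + 1) / ((1 + 1) * (max 1 (1 / 1) + 0)) \<le> S / c0"
  proof (rule LIMSEQ_le_const2[OF lim_g])
    show "\<exists>N. \<forall>n\<ge>N. g n \<le> S / c0" using bound by (intro exI[of _ 1]) auto
  qed
  hence "\<sigma> * (\<gamma> + 1) \<le> S / c0" by simp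
  hence "c0 * (\<sigma> * (\<gamma> + 1)) \<le> S" using c0 by (simp add: field_simps)
  moreover have "c0 * (\<sigma> * (\<gamma> + 1)) = (c0 + c1) * \<sigma>" unfolding \<gamma>_def using c0
    by (simp add: field_simps)
  ultimately show ?thesis unfolding \<sigma>_def S_def by simp
qed

lemma mem_sumset: "x \<in> sumset A B \<longleftrightarrow> (\<exists>a\<in>A. \<exists>b\<in>B. x = a + b)"
  unfolding sumset_def by auto

lemma sumset_mono: "A \<subseteq> A' \<Longrightarrow> B \<subseteq> B' \<Longrightarrow> sumset A B \<subseteq> sumset A' B'"
  unfolding sumset_def by blast

lemma sumset_image: "sumset A B = (\<lambda>(a,b). a + b) ` (A \<times> B)"
  unfolding sumset_def by auto

lemma finite_sumset: "finite A \<Longrightarrow> finite B \<Longrightarrow> finite (sumset A B)"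
  unfolding sumset_image by auto

lemma sumset_comm: "sumset (A::'a::ab_group_add set) B = sumset B A"
proof -
  have "sumset A B \<subseteq> sumset B A" for A B :: "'a set"
  proof
    fix x assume "x \<in> sumset A B"
    then obtain a b where "a \<in> A" "b \<in> B" "x = a + b" unfolding mem_sumset by auto
    hence "x = b + a" "b \<in> B" "a \<in> A" by (auto simp: add.commute)
    thus "x \<in> sumset B A" unfolding mem_sumset by auto
  qed
  thus ?thesis by blast
qed

lemma sumset_empty[simp]: "sumset {} B = {}" "sumset A {} = {}"
  unfolding sumset_def by auto

lemma sumset_ne: "A \<noteq> {} \<Longrightarrow> B \<noteq> {} \<Longrightarrow> sumset A B \<noteq> {}"
  unfolding sumset_def by auto

lemma sumset_singleton_right: "sumset A {t} = (\<lambda>x. x + t) ` A"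
  unfolding sumset_def by auto

lemma sumset_translate_left: "sumset ((\<lambda>x. x + t) ` A) B = (\<lambda>x. x + t) ` sumset A B"
proof
  show "sumset ((\<lambda>x. x + t) ` A) B \<subseteq> (\<lambda>x. x + t) ` sumset A B"
  proof
    fix x assume "x \<in> sumset ((\<lambda>x. x + t) ` A) B"
    then obtain a b where ab: "a \<in> A" "b \<in> B" "x = (a + t) + b" unfolding mem_sumset by auto
    hence "x = (a + b) + t" "a + b \<in> sumset A B" unfolding mem_sumset by (auto simp: ac_simps)
    thus "x \<in> (\<lambda>x. x + t) ` sumset A B" by blast
  qed
  show "(\<lambda>x. x + t) ` sumset A B \<subseteq> sumset ((\<lambda>x. x + t) ` A) B"
  proof
    fix x assume "x \<in> (\<lambda>x. x + t) ` sumset A B"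
    then obtain y where "y \<in> sumset A B" "x = y + t" by auto
    then obtain a b where ab: "a \<in> A" "b \<in> B" "x = (a + b) + t" unfolding mem_sumset by auto
    hence "x = (a + t) + b" "a + t \<in> (\<lambda>x. x + t) ` A" by (auto simp: ac_simps)
    thus "x \<in> sumset ((\<lambda>x. x + t) ` A) B" unfolding mem_sumset using ab by blast
  qed
qed

lemma sumset_translate_right: "sumset A ((\<lambda>x. x + t) ` B) = (\<lambda>x. x + t) ` sumset A B"
  using sumset_translate_left[of t B A] by (simp add: sumset_comm)

lemma card_translate: "card ((\<lambda>x. x + (t::'a::ab_group_add)) ` A) = card A"
  by (rule card_image) (simp add: inj_on_def)

lemma card3_translate:
  fixes A B W :: "'a::ab_group_add set"
  shows "card (sumset (sumset ((\<lambda>x. x + t) ` A) ((\<lambda>x. x + u) ` B)) W) = card (sumset (sumset A B) W)"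
  by (simp add: sumset_translate_left sumset_translate_right card_translate)

lemma card3_translate_W:
  fixes A B W :: "'a::ab_group_add set"
  shows "card (sumset (sumset A B) ((\<lambda>x. x + t) ` W)) = card (sumset (sumset A B) W)"
  by (simp add: sumset_translate_right card_translate)

lemma card_sumset_ge_left:
  fixes A B :: "'a::ab_group_add set"
  assumes "finite A" "finite B" "B \<noteq> {}"
  shows "card A \<le> card (sumset A B)"
proof -
  obtain b where "b \<in> B" using assms by auto
  have "(\<lambda>x. x + b) ` A \<subseteq> sumset A B" using \<open>b \<in> B\<close> unfolding sumset_def by auto
  hence "card ((\<lambda>x. x + b) ` A) \<le> card (sumset A B)"
    using assms by (intro card_mono finite_sumset) auto
  thus ?thesis by (simp add: card_translate)
qed

lemma fiber_sum:
  assumes "finite X"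
  shows "real (card X) = (\<Sum>i\<in>f ` X. real (card {x\<in>X. f x = i}))"
proof -
  have "X = (\<Union>i\<in>f ` X. {x\<in>X. f x = i})" by auto
  hence "card X = card (\<Union>i\<in>f ` X. {x\<in>X. f x = i})" by simp
  also have "\<dots> = (\<Sum>i\<in>f ` X. card {x\<in>X. f x = i})"
    using assms by (intro card_UN_disjoint) auto
  finally show ?thesis by simp
qed

definition nmul :: "nat \<Rightarrow> 'a::ab_group_add \<Rightarrow> 'a" where
  "nmul n z = (\<Sum>i<n. z)"

lemma nmul_add: "nmul (m + n) z = nmul m z + nmul n z"
  unfolding nmul_def by (induction n) (auto simp: ac_simps)

definition zmul :: "int \<Rightarrow> 'a::ab_group_add \<Rightarrow> 'a" where
  "zmul n z = nmul (nat n) z - nmul (nat (-n)) z"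

lemma nmul_diff_eq:
  assumes "int a - int b = int c - int d"
  shows "nmul a z - nmul b z = nmul c z - nmul d (z::'a::ab_group_add)"
proof -
  have "a + d = c + b" using assms by linarith
  hence "nmul a z + nmul d z = nmul c z + nmul b z" by (metis nmul_add)
  thus ?thesis by (simp add: algebra_simps)
qed

lemma zmul_add: "zmul (m + n) z = zmul m z + zmul n z"
proof -
  have "zmul m z + zmul n z = nmul (nat m + nat n) z - nmul (nat (-m) + nat (-n)) z"
    unfolding zmul_def nmul_add by (simp add: algebra_simps)
  also have "\<dots> = nmul (nat (m+n)) z - nmul (nat (-(m+n))) z"
    by (rule nmul_diff_eq) simp
  finally show ?thesis unfolding zmul_def by simp
qed

lemma zmul_0[simp]: "zmul 0 z = 0" unfolding zmul_def nmul_def by simp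
lemma zmul_1[simp]: "zmul 1 z = z" unfolding zmul_def nmul_def by simp
lemma zmul_neg: "zmul (-n) z = - zmul n z"
proof -
  have "zmul n z + zmul (-n) z = 0" using zmul_add[of n "-n" z] by simp
  thus ?thesis by (metis neg_eq_iff_add_eq_0)
qed
lemma zmul_diff: "zmul (m - n) z = zmul m z - zmul n z"
  using zmul_add[of m "-n" z] by (simp add: zmul_neg)

lemma subgrp_add: "subgrp H \<Longrightarrow> x \<in> H \<Longrightarrow> y \<in> H \<Longrightarrow> x + y \<in> H"
  unfolding subgrp_def by blast

lemma subgrp_neg: "subgrp H \<Longrightarrow> x \<in> H \<Longrightarrow> - x \<in> H"
  unfolding subgrp_def by blast

lemma subgrp_diff: "subgrp H \<Longrightarrow> x \<in> H \<Longrightarrow> y \<in> H \<Longrightarrow> x - y \<in> H"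
proof -
  assume h: "subgrp H" "x \<in> H" "y \<in> H"
  have "x + - y \<in> H" using h subgrp_add subgrp_neg by blast
  thus ?thesis by (simp only: diff_conv_add_uminus)
qed

lemma subgrp_0: "subgrp H \<Longrightarrow> 0 \<in> H"
  unfolding subgrp_def by blast

lemma zmul_in_H:
  assumes "subgrp H" "infinite_order_mod H z" "zmul n z \<in> H"
  shows "n = 0"
proof (rule ccontr)
  assume "n \<noteq> 0"
  show False
  proof (cases "0 < n")
    case True
    hence "zmul n z = nmul (nat n) z" unfolding zmul_def nmul_def by simp
    hence "(\<Sum>i<nat n. z) \<in> H" using assms(3) unfolding nmul_def by simp
    thus False using assms(2) True unfolding infinite_order_mod_def by auto
  next
    case False
    hence "0 < -n" using \<open>n \<noteq> 0\<close> by simp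
    hence "zmul n z = - nmul (nat (-n)) z" unfolding zmul_def nmul_def by simp
    hence "(\<Sum>i<nat (-n). z) \<in> H" using assms(3) subgrp_neg[OF assms(1), of "zmul n z"]
      unfolding nmul_def by simp
    thus False using assms(2) \<open>0 < -n\<close> unfolding infinite_order_mod_def by auto
  qed
qed

definition Kgrp :: "'a::ab_group_add set \<Rightarrow> 'a \<Rightarrow> 'a set" where
  "Kgrp H z = {g. \<exists>n. g - zmul n z \<in> H}"

definition coord :: "'a::ab_group_add set \<Rightarrow> 'a \<Rightarrow> 'a \<Rightarrow> int" where
  "coord H z g = (THE n. g - zmul n z \<in> H)"

lemma coord_unique:
  assumes "subgrp H" "infinite_order_mod H z" "g - zmul n z \<in> H" "g - zmul m z \<in> H"
  shows "n = m"
proof -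
  have "(g - zmul m z) - (g - zmul n z) \<in> H" using assms subgrp_diff by blast
  hence "zmul (n - m) z \<in> H" by (simp add: zmul_diff)
  hence "n - m = 0" by (rule zmul_in_H[OF assms(1,2)])
  thus ?thesis by simp
qed

lemma coord_eq:
  assumes "subgrp H" "infinite_order_mod H z" "g - zmul n z \<in> H"
  shows "coord H z g = n"
  unfolding coord_def using assms coord_unique by blast

lemma coord_K:
  assumes "subgrp H" "infinite_order_mod H z" "g \<in> Kgrp H z"
  shows "g - zmul (coord H z g) z \<in> H"
proof -
  obtain n where "g - zmul n z \<in> H" using assms(3) unfolding Kgrp_def by auto
  thus ?thesis using coord_eq[OF assms(1,2)] by simp
qed

lemma K_add:
  assumes "subgrp H" "g \<in> Kgrp H z" "g' \<in> Kgrp H z"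
  shows "g + g' \<in> Kgrp H z"
proof -
  obtain n n' where "g - zmul n z \<in> H" "g' - zmul n' z \<in> H" using assms unfolding Kgrp_def by auto
  hence "(g - zmul n z) + (g' - zmul n' z) \<in> H" using subgrp_add[OF assms(1)] by blast
  hence "(g + g') - zmul (n + n') z \<in> H" by (simp add: zmul_add algebra_simps)
  thus ?thesis unfolding Kgrp_def by blast
qed

lemma subgrp_K:
  assumes "subgrp H"
  shows "subgrp (Kgrp H z)"
  unfolding subgrp_def
proof (intro conjI ballI)
  show "0 \<in> Kgrp H z" unfolding Kgrp_def using subgrp_0[OF assms] by (intro CollectI exI[of _ 0]) simp
  show "x + y \<in> Kgrp H z" if "x \<in> Kgrp H z" "y \<in> Kgrp H z" for x y using K_add assms that by blast
  fix x assume xK: "x \<in> Kgrp H z"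
  show "- x \<in> Kgrp H z"
  proof -
    obtain n where "x - zmul n z \<in> H" using xK unfolding Kgrp_def by auto
    hence "- (x - zmul n z) \<in> H" using subgrp_neg[OF assms] by blast
    hence "- x - zmul (-n) z \<in> H" by (simp add: zmul_neg algebra_simps)
    thus ?thesis unfolding Kgrp_def by blast
  qed
qed

lemma coord_add:
  assumes "subgrp H" "infinite_order_mod H z" "g \<in> Kgrp H z" "g' \<in> Kgrp H z"
  shows "coord H z (g + g') = coord H z g + coord H z g'"
proof (rule coord_eq[OF assms(1,2)])
  have "(g - zmul (coord H z g) z) + (g' - zmul (coord H z g') z) \<in> H"
    using coord_K[OF assms(1,2)] assms(3,4) subgrp_add[OF assms(1)] by blast
  thus "g + g' - zmul (coord H z g + coord H z g') z \<in> H" by (simp add: zmul_add algebra_simps)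
qed

lemma H_in_K: "h \<in> H \<Longrightarrow> h \<in> Kgrp H z"
  unfolding Kgrp_def by (intro CollectI exI[of _ 0]) simp

lemma coord_H: "subgrp H \<Longrightarrow> infinite_order_mod H z \<Longrightarrow> h \<in> H \<Longrightarrow> coord H z h = 0"
  by (rule coord_eq) auto

lemma coset_z_in_K: "g \<in> coset H z \<Longrightarrow> g \<in> Kgrp H z"
  unfolding Kgrp_def coset_def by (intro CollectI exI[of _ 1]) auto

lemma coord_coset_z: "subgrp H \<Longrightarrow> infinite_order_mod H z \<Longrightarrow> g \<in> coset H z \<Longrightarrow> coord H z g = 1"
  by (rule coord_eq) (auto simp: coset_def)

lemma ex_max_on:
  fixes f :: "'b \<Rightarrow> nat"
  assumes "finite A" "A \<noteq> {}"
  shows "\<exists>x\<in>A. \<forall>y\<in>A. f y \<le> f x"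
proof -
  have "Max (f ` A) \<in> f ` A" using assms by simp
  then obtain x where x: "x \<in> A" "f x = Max (f ` A)" by auto
  have "\<forall>y\<in>A. f y \<le> f x" unfolding x(2) using assms by simp
  thus ?thesis using x(1) by blast
qed

lemma sqrt_le_of_both: "0 \<le> p \<Longrightarrow> 0 \<le> q \<Longrightarrow> p \<le> x \<Longrightarrow> q \<le> x \<Longrightarrow> sqrt (p * q) \<le> (x::real)"
proof -
  assume h: "0 \<le> p" "0 \<le> q" "p \<le> x" "q \<le> x"
  have "p * q \<le> x * x" using h by (intro mult_mono) auto
  hence "sqrt (p * q) \<le> sqrt (x * x)" by (rule real_sqrt_le_mono)
  thus ?thesis using h by simp
qed

lemma sumsetE: "x \<in> sumset A B \<Longrightarrow> (\<And>a b. a \<in> A \<Longrightarrow> b \<in> B \<Longrightarrow> x = a + b \<Longrightarrow> P) \<Longrightarrow> P"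
  unfolding sumset_def by blast

definition cl :: "'a::ab_group_add set \<Rightarrow> 'a set \<Rightarrow> 'a \<Rightarrow> 'a set" where
  "cl K X g = {x\<in>X. x - g \<in> K}"

lemma cl_eq:
  assumes sK: "subgrp K" and "g1 - g2 \<in> K"
  shows "cl K X g1 = cl K X g2"
proof -
  have "x - g1 \<in> K \<longleftrightarrow> x - g2 \<in> K" for x
  proof
    assume "x - g1 \<in> K"
    hence "(x - g1) + (g1 - g2) \<in> K" using assms subgrp_add by blast
    thus "x - g2 \<in> K" by simp
  next
    assume "x - g2 \<in> K"
    hence "(x - g2) - (g1 - g2) \<in> K" using assms subgrp_diff by blast
    thus "x - g1 \<in> K" by simp
  qed
  thus ?thesis unfolding cl_def by auto
qed

lemma half_bound:
  fixes K W A B :: "'a::ab_group_add set" and c mb :: real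
  assumes sK: "subgrp K" and WK: "W \<subseteq> K" and c: "0 \<le> c"
    and hypK: "\<And>A B. A \<subseteq> K \<Longrightarrow> B \<subseteq> K \<Longrightarrow> finite A \<Longrightarrow> finite B \<Longrightarrow> A \<noteq> {} \<Longrightarrow> B \<noteq> {} \<Longrightarrow>
       c * sqrt (real (card A) * real (card B)) \<le> real (card (sumset (sumset A B) W))"
    and fA: "finite A" and fB: "finite B" and fW: "finite W" and a0: "a0 \<in> A"
    and mb: "0 < mb" and mbB: "\<forall>b\<in>B. real (card (cl K B b)) \<le> mb"
  shows "c * sqrt (real (card (cl K A a0))) * real (card B) / sqrt mb
         \<le> real (card (sumset (sumset A B) W))"
proof -
  define A0 where "A0 = cl K A a0"
  define CB where "CB = (cl K B) ` B"
  define T where "T = (\<lambda>\<beta>. sumset (sumset A0 \<beta>) W)"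
  have fCB: "finite CB" unfolding CB_def using fB by simp
  have A0A: "A0 \<subseteq> A" unfolding A0_def cl_def by auto
  have fA0: "finite A0" using A0A fA finite_subset by auto
  have a0A0: "a0 \<in> A0" unfolding A0_def cl_def using a0 subgrp_0[OF sK] by simp
  have CBsub: "\<forall>\<beta>\<in>CB. \<beta> \<subseteq> B" unfolding CB_def cl_def by auto
  have fbeta: "\<forall>\<beta>\<in>CB. finite \<beta>" using CBsub fB finite_subset by blast
  have Tsub: "\<forall>\<beta>\<in>CB. T \<beta> \<subseteq> sumset (sumset A B) W"
    unfolding T_def using A0A CBsub by (meson order_refl sumset_mono)
  have Tdisj: "\<forall>\<beta>1\<in>CB. \<forall>\<beta>2\<in>CB. \<beta>1 \<noteq> \<beta>2 \<longrightarrow> T \<beta>1 \<inter> T \<beta>2 = {}"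
  proof (intro ballI impI)
    fix \<beta>1 \<beta>2 assume b1: "\<beta>1 \<in> CB" and b2: "\<beta>2 \<in> CB" and ne: "\<beta>1 \<noteq> \<beta>2"
    obtain g1 where g1: "g1 \<in> B" "\<beta>1 = cl K B g1" using b1 unfolding CB_def by auto
    obtain g2 where g2: "g2 \<in> B" "\<beta>2 = cl K B g2" using b2 unfolding CB_def by auto
    show "T \<beta>1 \<inter> T \<beta>2 = {}"
    proof (rule ccontr)
      assume "T \<beta>1 \<inter> T \<beta>2 \<noteq> {}"
      then obtain x where "x \<in> T \<beta>1" "x \<in> T \<beta>2" by auto
      hence "x \<in> sumset (sumset A0 \<beta>1) W" "x \<in> sumset (sumset A0 \<beta>2) W" unfolding T_def by auto
      obtain u1 w1 where u1: "u1 \<in> sumset A0 \<beta>1" "w1 \<in> W" "x = u1 + w1"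
        using \<open>x \<in> sumset (sumset A0 \<beta>1) W\<close> by (rule sumsetE)
      obtain u2 w2 where u2: "u2 \<in> sumset A0 \<beta>2" "w2 \<in> W" "x = u2 + w2"
        using \<open>x \<in> sumset (sumset A0 \<beta>2) W\<close> by (rule sumsetE)
      obtain x1 y1 where xy1: "x1 \<in> A0" "y1 \<in> \<beta>1" "u1 = x1 + y1"
        using u1(1) by (rule sumsetE)
      obtain x2 y2 where xy2: "x2 \<in> A0" "y2 \<in> \<beta>2" "u2 = x2 + y2"
        using u2(1) by (rule sumsetE)
      have kx: "(x2 - a0) - (x1 - a0) \<in> K" using xy1 xy2 sK subgrp_diff unfolding A0_def cl_def by blast
      have kw: "w2 - w1 \<in> K" using u1 u2 WK sK subgrp_diff by blast
      have ky1: "y1 - g1 \<in> K" using xy1 g1 unfolding cl_def by auto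
      have ky2: "y2 - g2 \<in> K" using xy2 g2 unfolding cl_def by auto
      have "y1 - y2 = ((x2 - a0) - (x1 - a0)) + (w2 - w1)" using u1 u2 xy1 xy2
        by (simp add: algebra_simps)
      hence "y1 - y2 \<in> K" using kx kw sK subgrp_add by metis
      hence "((y1 - g1) - (y2 - g2)) - (y1 - y2) \<in> K" using ky1 ky2 sK subgrp_diff by metis
      hence "g2 - g1 \<in> K" by (simp add: algebra_simps)
      hence "cl K B g2 = cl K B g1" by (rule cl_eq[OF sK])
      thus False using ne g1 g2 by simp
    qed
  qed
  have Tbound: "\<forall>\<beta>\<in>CB. c * sqrt (real (card A0) * real (card \<beta>)) \<le> real (card (T \<beta>))"
  proof
    fix \<beta> assume b: "\<beta> \<in> CB"
    obtain g where g: "g \<in> B" "\<beta> = cl K B g" using b unfolding CB_def by auto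
    define A1 where "A1 = (\<lambda>x. x + (- a0)) ` A0"
    define B1 where "B1 = (\<lambda>x. x + (- g)) ` \<beta>"
    have gb: "g \<in> \<beta>" using g subgrp_0[OF sK] unfolding cl_def by simp
    have "c * sqrt (real (card A1) * real (card B1)) \<le> real (card (sumset (sumset A1 B1) W))"
    proof (rule hypK)
      show "A1 \<subseteq> K" unfolding A1_def A0_def cl_def by auto
      show "B1 \<subseteq> K" unfolding B1_def g(2) cl_def by auto
      show "finite A1" "finite B1" unfolding A1_def B1_def using fA0 fbeta b by auto
      show "A1 \<noteq> {}" "B1 \<noteq> {}" unfolding A1_def B1_def using a0A0 gb by auto
    qed
    moreover have "card A1 = card A0" unfolding A1_def by (rule card_translate)
    moreover have "card B1 = card \<beta>" unfolding B1_def by (rule card_translate)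
    moreover have "card (sumset (sumset A1 B1) W) = card (T \<beta>)" unfolding A1_def B1_def T_def
      by (rule card3_translate)
    ultimately show "c * sqrt (real (card A0) * real (card \<beta>)) \<le> real (card (T \<beta>))" by simp
  qed
  have fT: "\<forall>\<beta>\<in>CB. finite (T \<beta>)" unfolding T_def using fA0 fbeta fW by (auto intro: finite_sumset)
  have "real (card (\<Union>(T ` CB))) = (\<Sum>\<beta>\<in>CB. real (card (T \<beta>)))"
    using card_UN_disjoint[OF fCB fT Tdisj] by simp
  moreover have "card (\<Union>(T ` CB)) \<le> card (sumset (sumset A B) W)"
    using Tsub by (intro card_mono finite_sumset fA fB fW) auto
  ultimately have X1: "(\<Sum>\<beta>\<in>CB. real (card (T \<beta>))) \<le> real (card (sumset (sumset A B) W))" by simp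
  have cardB: "real (card B) = (\<Sum>\<beta>\<in>CB. real (card \<beta>))"
  proof -
    have "B = \<Union> CB" unfolding CB_def cl_def using subgrp_0[OF sK] by auto
    moreover have "card (\<Union> CB) = sum card CB"
    proof (rule card_Union_disjoint)
      show "pairwise disjnt CB"
        unfolding pairwise_def disjnt_def
      proof (intro ballI impI)
        fix \<beta>1 \<beta>2 assume b1: "\<beta>1 \<in> CB" and b2: "\<beta>2 \<in> CB" and ne: "\<beta>1 \<noteq> \<beta>2"
        obtain g1 where g1: "\<beta>1 = cl K B g1" using b1 unfolding CB_def by auto
        obtain g2 where g2: "\<beta>2 = cl K B g2" using b2 unfolding CB_def by auto
        show "\<beta>1 \<inter> \<beta>2 = {}"
        proof (rule ccontr)
          assume "\<beta>1 \<inter> \<beta>2 \<noteq> {}"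
          then obtain y where "y - g1 \<in> K" "y - g2 \<in> K" using g1 g2 unfolding cl_def by auto
          hence "(y - g2) - (y - g1) \<in> K" using sK subgrp_diff by blast
          hence "g1 - g2 \<in> K" by simp
          hence "cl K B g1 = cl K B g2" by (rule cl_eq[OF sK])
          thus False using ne g1 g2 by simp
        qed
      qed
      show "\<And>A. A \<in> CB \<Longrightarrow> finite A" using fbeta by auto
    qed
    ultimately show ?thesis by simp
  qed
  have "c * sqrt (real (card A0)) * real (card B) / sqrt mb
      = (\<Sum>\<beta>\<in>CB. c * sqrt (real (card A0)) * (real (card \<beta>) / sqrt mb))"
    unfolding cardB by (simp add: sum_distrib_left sum_divide_distrib)
  also have "\<dots> \<le> (\<Sum>\<beta>\<in>CB. c * sqrt (real (card A0) * real (card \<beta>)))"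
  proof (rule sum_mono)
    fix \<beta> assume b: "\<beta> \<in> CB"
    obtain g where g: "g \<in> B" "\<beta> = cl K B g" using b unfolding CB_def by auto
    have le: "real (card \<beta>) \<le> mb" using mbB g by simp
    have "real (card \<beta>) / sqrt mb \<le> sqrt (real (card \<beta>))"
    proof -
      have "sqrt (real (card \<beta>)) * sqrt (real (card \<beta>)) \<le> sqrt (real (card \<beta>)) * sqrt mb"
        using le by (intro mult_left_mono) auto
      thus ?thesis using mb by (simp add: divide_le_eq)
    qed
    hence "c * sqrt (real (card A0)) * (real (card \<beta>) / sqrt mb)
        \<le> c * sqrt (real (card A0)) * sqrt (real (card \<beta>))"
      using c by (intro mult_left_mono) auto
    thus "c * sqrt (real (card A0)) * (real (card \<beta>) / sqrt mb) \<le> c * sqrt (real (card A0) * real (card \<beta>))"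
      by (simp add: real_sqrt_mult)
  qed
  also have "\<dots> \<le> (\<Sum>\<beta>\<in>CB. real (card (T \<beta>)))" using Tbound by (intro sum_mono) auto
  also have "\<dots> \<le> real (card (sumset (sumset A B) W))" by (rule X1)
  finally show ?thesis unfolding A0_def .
qed

lemma K_reduction:
  fixes K W A B :: "'a::ab_group_add set" and c :: real
  assumes sK: "subgrp K" and WK: "W \<subseteq> K" and c: "0 \<le> c" and fW: "finite W"
    and hypK: "\<And>A B. A \<subseteq> K \<Longrightarrow> B \<subseteq> K \<Longrightarrow> finite A \<Longrightarrow> finite B \<Longrightarrow> A \<noteq> {} \<Longrightarrow> B \<noteq> {} \<Longrightarrow>
       c * sqrt (real (card A) * real (card B)) \<le> real (card (sumset (sumset A B) W))"
    and fA: "finite A" and fB: "finite B" and neA: "A \<noteq> {}" and neB: "B \<noteq> {}"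
  shows "c * sqrt (real (card A) * real (card B)) \<le> real (card (sumset (sumset A B) W))"
proof -
  obtain a0 where a0: "a0 \<in> A" "\<forall>a\<in>A. card (cl K A a) \<le> card (cl K A a0)"
    using ex_max_on[OF fA neA, of "\<lambda>a. card (cl K A a)"] by auto
  obtain b0 where b0: "b0 \<in> B" "\<forall>b\<in>B. card (cl K B b) \<le> card (cl K B b0)"
    using ex_max_on[OF fB neB, of "\<lambda>b. card (cl K B b)"] by auto
  define ma where "ma = real (card (cl K A a0))"
  define mb where "mb = real (card (cl K B b0))"
  have ma: "0 < ma"
  proof -
    have "a0 \<in> cl K A a0" unfolding cl_def using a0 subgrp_0[OF sK] by simp
    moreover have "finite (cl K A a0)" unfolding cl_def using fA by simp
    ultimately show ?thesis unfolding ma_def by (simp add: card_gt_0_iff) blast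
  qed
  have mb: "0 < mb"
  proof -
    have "b0 \<in> cl K B b0" unfolding cl_def using b0 subgrp_0[OF sK] by simp
    moreover have "finite (cl K B b0)" unfolding cl_def using fB by simp
    ultimately show ?thesis unfolding mb_def by (simp add: card_gt_0_iff) blast
  qed
  have X1: "c * sqrt ma * real (card B) / sqrt mb \<le> real (card (sumset (sumset A B) W))"
    unfolding ma_def
    by (rule half_bound[OF sK WK c hypK fA fB fW a0(1) mb]) (use b0 in \<open>auto simp: mb_def\<close>)
  have hypK': "\<And>A B. A \<subseteq> K \<Longrightarrow> B \<subseteq> K \<Longrightarrow> finite A \<Longrightarrow> finite B \<Longrightarrow> A \<noteq> {} \<Longrightarrow> B \<noteq> {} \<Longrightarrow>
       c * sqrt (real (card A) * real (card B)) \<le> real (card (sumset (sumset A B) W))"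
    by (rule hypK)
  have X2: "c * sqrt mb * real (card A) / sqrt ma \<le> real (card (sumset (sumset B A) W))"
    unfolding mb_def
    by (rule half_bound[OF sK WK c hypK' fB fA fW b0(1) ma]) (use a0 in \<open>auto simp: ma_def\<close>)
  have X2': "c * sqrt mb * real (card A) / sqrt ma \<le> real (card (sumset (sumset A B) W))"
    using X2 by (simp add: sumset_comm[of A B])
  have "sqrt ((c * sqrt ma * real (card B) / sqrt mb) * (c * sqrt mb * real (card A) / sqrt ma))
        \<le> real (card (sumset (sumset A B) W))"
    using X1 X2' ma mb c by (intro sqrt_le_of_both) auto
  moreover have "(c * sqrt ma * real (card B) / sqrt mb) * (c * sqrt mb * real (card A) / sqrt ma)
        = (c * c) * (real (card A) * real (card B))"
    using ma mb by (simp add: field_simps)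
  moreover have "sqrt ((c * c) * (real (card A) * real (card B))) = c * sqrt (real (card A) * real (card B))"
    using c by (simp add: real_sqrt_mult)
  ultimately show ?thesis by simp
qed

lemma sumsetI: "a \<in> A \<Longrightarrow> b \<in> B \<Longrightarrow> a + b \<in> sumset A B"
  unfolding sumset_def by blast

lemma within_K:
  fixes H W0 W1 A B :: "'a::ab_group_add set" and z :: 'a
  assumes sH: "subgrp H" and io: "infinite_order_mod H z"
    and W0H: "W0 \<subseteq> H" and W1z: "W1 \<subseteq> coset H z"
    and fW0: "finite W0" and neW0: "W0 \<noteq> {}" and fW1: "finite W1" and neW1: "W1 \<noteq> {}"
    and hyp0: "\<And>A B. finite A \<Longrightarrow> finite B \<Longrightarrow> A \<noteq> {} \<Longrightarrow> B \<noteq> {} \<Longrightarrow>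
       real (card W0) * sqrt (real (card A) * real (card B)) \<le> real (card (sumset (sumset A B) W0))"
    and hyp1: "\<And>A B. finite A \<Longrightarrow> finite B \<Longrightarrow> A \<noteq> {} \<Longrightarrow> B \<noteq> {} \<Longrightarrow>
       real (card W1) * sqrt (real (card A) * real (card B)) \<le> real (card (sumset (sumset A B) W1))"
    and AK: "A \<subseteq> Kgrp H z" and BK: "B \<subseteq> Kgrp H z"
    and fA: "finite A" and fB: "finite B" and neA: "A \<noteq> {}" and neB: "B \<noteq> {}"
  shows "(real (card W0) + real (card W1)) * sqrt (real (card A) * real (card B))
         \<le> real (card (sumset (sumset A B) (W0 \<union> W1)))"
proof -
  define co where "co = coord H z"
  define S where "S = sumset (sumset A B) (W0 \<union> W1)"
  define I where "I = co ` A"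
  define J where "J = co ` B"
  define F where "F = co ` S"
  define a where "a = (\<lambda>i. real (card {x\<in>A. co x = i}))"
  define b where "b = (\<lambda>j. real (card {x\<in>B. co x = j}))"
  define s where "s = (\<lambda>n. real (card {x\<in>S. co x = n}))"
  have fS: "finite S" unfolding S_def using fA fB fW0 fW1 by (intro finite_sumset) auto
  have W0K: "W0 \<subseteq> Kgrp H z" using W0H H_in_K by blast
  have W1K: "W1 \<subseteq> Kgrp H z" using W1z coset_z_in_K by blast
  have co_sum: "\<And>x y w. x \<in> Kgrp H z \<Longrightarrow> y \<in> Kgrp H z \<Longrightarrow> w \<in> Kgrp H z \<Longrightarrow>
      co (x + y + w) = co x + co y + co w"
    unfolding co_def using coord_add[OF sH io] K_add[OF sH] by metis
  have co0: "\<And>w. w \<in> W0 \<Longrightarrow> co w = 0" unfolding co_def using coord_H[OF sH io] W0H by blast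
  have co1: "\<And>w. w \<in> W1 \<Longrightarrow> co w = 1" unfolding co_def using coord_coset_z[OF sH io] W1z by blast
  have key: "(real (card W0) + real (card W1)) * sqrt (sum a I * sum b J) \<le> sum s F"
  proof (rule W1)
    show "finite I" "finite J" "finite F" unfolding I_def J_def F_def using fA fB fS by auto
    show "I \<noteq> {}" "J \<noteq> {}" unfolding I_def J_def using neA neB by auto
    show "\<forall>i\<in>I. 0 < a i" unfolding I_def a_def using fA by (auto simp: card_gt_0_iff)
    show "\<forall>j\<in>J. 0 < b j" unfolding J_def b_def using fB by (auto simp: card_gt_0_iff)
    show "\<forall>n. 0 \<le> s n" unfolding s_def by simp
    show "\<forall>n. n \<notin> F \<longrightarrow> s n = 0"
    proof (intro allI impI)
      fix n assume "n \<notin> F"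
      hence e: "{x\<in>S. co x = n} = {}" unfolding F_def by auto
      show "s n = 0" unfolding s_def by (simp only: e card.empty of_nat_0)
    qed
    show "0 < real (card W0)" "0 < real (card W1)" using fW0 neW0 fW1 neW1 by (auto simp: card_gt_0_iff)
    show "\<forall>i\<in>I. \<forall>j\<in>J. real (card W0) * sqrt (a i * b j) \<le> s (i + j)"
    proof (intro ballI)
      fix i j assume i: "i \<in> I" and j: "j \<in> J"
      define Ai where "Ai = {x\<in>A. co x = i}"
      define Bj where "Bj = {x\<in>B. co x = j}"
      have "real (card W0) * sqrt (real (card Ai) * real (card Bj)) \<le> real (card (sumset (sumset Ai Bj) W0))"
        using i j fA fB unfolding Ai_def Bj_def I_def J_def by (intro hyp0) auto
      moreover have "sumset (sumset Ai Bj) W0 \<subseteq> {x\<in>S. co x = i + j}"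
      proof
        fix x assume "x \<in> sumset (sumset Ai Bj) W0"
        then obtain u w where u: "u \<in> sumset Ai Bj" "w \<in> W0" "x = u + w" by (rule sumsetE)
        then obtain p q where pq: "p \<in> Ai" "q \<in> Bj" "u = p + q" by (metis sumsetE)
        have "p + q \<in> sumset A B" using pq unfolding Ai_def Bj_def by (intro sumsetI) auto
        hence "x \<in> S" unfolding S_def using u pq by (auto intro: sumsetI)
        moreover have "co x = i + j" using co_sum[of p q w] pq u AK BK W0K co0
          unfolding Ai_def Bj_def by auto
        ultimately show "x \<in> {x\<in>S. co x = i + j}" by simp
      qed
      hence "card (sumset (sumset Ai Bj) W0) \<le> card {x\<in>S. co x = i + j}"
        using fS by (intro card_mono) auto
      ultimately show "real (card W0) * sqrt (a i * b j) \<le> s (i + j)"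
        unfolding a_def b_def s_def Ai_def Bj_def by linarith
    qed
    show "\<forall>i\<in>I. \<forall>j\<in>J. real (card W1) * sqrt (a i * b j) \<le> s (i + j + 1)"
    proof (intro ballI)
      fix i j assume i: "i \<in> I" and j: "j \<in> J"
      define Ai where "Ai = {x\<in>A. co x = i}"
      define Bj where "Bj = {x\<in>B. co x = j}"
      have "real (card W1) * sqrt (real (card Ai) * real (card Bj)) \<le> real (card (sumset (sumset Ai Bj) W1))"
        using i j fA fB unfolding Ai_def Bj_def I_def J_def by (intro hyp1) auto
      moreover have "sumset (sumset Ai Bj) W1 \<subseteq> {x\<in>S. co x = i + j + 1}"
      proof
        fix x assume "x \<in> sumset (sumset Ai Bj) W1"
        then obtain u w where u: "u \<in> sumset Ai Bj" "w \<in> W1" "x = u + w" by (rule sumsetE)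
        then obtain p q where pq: "p \<in> Ai" "q \<in> Bj" "u = p + q" by (metis sumsetE)
        have "p + q \<in> sumset A B" using pq unfolding Ai_def Bj_def by (intro sumsetI) auto
        hence "x \<in> S" unfolding S_def using u pq by (auto intro: sumsetI)
        moreover have "co x = i + j + 1" using co_sum[of p q w] pq u AK BK W1K co1
          unfolding Ai_def Bj_def by auto
        ultimately show "x \<in> {x\<in>S. co x = i + j + 1}" by simp
      qed
      hence "card (sumset (sumset Ai Bj) W1) \<le> card {x\<in>S. co x = i + j + 1}"
        using fS by (intro card_mono) auto
      ultimately show "real (card W1) * sqrt (a i * b j) \<le> s (i + j + 1)"
        unfolding a_def b_def s_def Ai_def Bj_def by linarith
    qed
    show "W01 I J \<subseteq> F"
    proof
      fix n assume "n \<in> W01 I J"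
      then obtain p q where pq: "p \<in> A" "q \<in> B" "n = co p + co q \<or> n = co p + co q + 1"
        unfolding W01_def I_def J_def by auto
      obtain w0 where w0: "w0 \<in> W0" using neW0 by auto
      obtain w1 where w1: "w1 \<in> W1" using neW1 by auto
      have "p + q + w0 \<in> S" "p + q + w1 \<in> S" unfolding S_def using pq w0 w1 by (auto intro!: sumsetI)
      moreover have "co (p + q + w0) = co p + co q" using co_sum[of p q w0] pq AK BK W0K co0 w0 by auto
      moreover have "co (p + q + w1) = co p + co q + 1" using co_sum[of p q w1] pq AK BK W1K co1 w1 by auto
      ultimately show "n \<in> F" unfolding F_def using pq(3) by (metis image_eqI)
    qed
  qed
  have "sum a I = real (card A)" unfolding a_def I_def using fiber_sum[OF fA, of co] by simp
  moreover have "sum b J = real (card B)" unfolding b_def J_def using fiber_sum[OF fB, of co] by simp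
  moreover have "sum s F = real (card S)" unfolding s_def F_def using fiber_sum[OF fS, of co] by simp
  ultimately show ?thesis using key unfolding S_def by simp
qed

lemma z_notin_H: "infinite_order_mod H z \<Longrightarrow> z \<notin> H"
  unfolding infinite_order_mod_def by (metis lessThan_0 less_one sum.lessThan_Suc sum.empty add_0 One_nat_def)

lemma step:
  fixes H W0 W1 A B :: "'a::ab_group_add set" and z :: 'a
  assumes sH: "subgrp H" and io: "infinite_order_mod H z"
    and W0H: "W0 \<subseteq> H" and W1z: "W1 \<subseteq> coset H z"
    and fW0: "finite W0" and neW0: "W0 \<noteq> {}" and fW1: "finite W1" and neW1: "W1 \<noteq> {}"
    and hyp0: "\<And>A B. finite A \<Longrightarrow> finite B \<Longrightarrow> A \<noteq> {} \<Longrightarrow> B \<noteq> {} \<Longrightarrow>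
       real (card W0) * sqrt (real (card A) * real (card B)) \<le> real (card (sumset (sumset A B) W0))"
    and hyp1: "\<And>A B. finite A \<Longrightarrow> finite B \<Longrightarrow> A \<noteq> {} \<Longrightarrow> B \<noteq> {} \<Longrightarrow>
       real (card W1) * sqrt (real (card A) * real (card B)) \<le> real (card (sumset (sumset A B) W1))"
    and fA: "finite A" and fB: "finite B" and neA: "A \<noteq> {}" and neB: "B \<noteq> {}"
  shows "real (card (W0 \<union> W1)) * sqrt (real (card A) * real (card B))
         \<le> real (card (sumset (sumset A B) (W0 \<union> W1)))"
proof -
  have disj: "W0 \<inter> W1 = {}"
  proof (rule ccontr)
    assume "W0 \<inter> W1 \<noteq> {}"
    then obtain w where "w \<in> W0" "w \<in> W1" by auto
    then obtain h where "h \<in> H" "w = h + z" "w \<in> H" using W0H W1z unfolding coset_def by auto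
    hence "w - h \<in> H" using subgrp_diff[OF sH] by blast
    hence "z \<in> H" using \<open>w = h + z\<close> by simp
    thus False using z_notin_H[OF io] by simp
  qed
  have card_un: "real (card (W0 \<union> W1)) = real (card W0) + real (card W1)"
    using card_Un_disjoint[OF fW0 fW1 disj] by simp
  have "real (card (W0 \<union> W1)) * sqrt (real (card A) * real (card B))
         \<le> real (card (sumset (sumset A B) (W0 \<union> W1)))"
  proof (rule K_reduction[OF subgrp_K[OF sH]])
    show "W0 \<union> W1 \<subseteq> Kgrp H z" using W0H W1z H_in_K coset_z_in_K by blast
    show "0 \<le> real (card (W0 \<union> W1))" by simp
    show "finite (W0 \<union> W1)" using fW0 fW1 by simp
    show "finite A" "finite B" "A \<noteq> {}" "B \<noteq> {}" using fA fB neA neB by auto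
    fix A' B' assume "A' \<subseteq> Kgrp H z" "B' \<subseteq> Kgrp H z" "finite A'" "finite B'" "A' \<noteq> {}" "B' \<noteq> {}"
    thus "real (card (W0 \<union> W1)) * sqrt (real (card A') * real (card B'))
         \<le> real (card (sumset (sumset A' B') (W0 \<union> W1)))"
      unfolding card_un using within_K[OF sH io W0H W1z fW0 neW0 fW1 neW1 hyp0 hyp1] by blast
  qed
  thus ?thesis .
qed

lemma coset_disjoint:
  assumes sH: "subgrp H" and ne: "coset H x \<noteq> coset H y"
  shows "coset H x \<inter> coset H y = {}"
proof (rule ccontr)
  assume "coset H x \<inter> coset H y \<noteq> {}"
  then obtain h1 h2 where h: "h1 \<in> H" "h2 \<in> H" "h1 + x = h2 + y" unfolding coset_def by auto
  hence d: "x - y = h2 - h1" by (simp add: algebra_simps)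
  have dH: "x - y \<in> H" unfolding d using h subgrp_diff[OF sH] by blast
  have "coset H x = coset H y"
  proof
    show "coset H x \<subseteq> coset H y"
    proof
      fix g assume "g \<in> coset H x"
      then obtain h where "h \<in> H" "g = h + x" unfolding coset_def by auto
      hence "g = (h + (x - y)) + y" "h + (x - y) \<in> H" using dH subgrp_add[OF sH] by auto
      thus "g \<in> coset H y" unfolding coset_def by blast
    qed
    show "coset H y \<subseteq> coset H x"
    proof
      fix g assume "g \<in> coset H y"
      then obtain h where "h \<in> H" "g = h + y" unfolding coset_def by auto
      hence "g = (h - (x - y)) + x" "h - (x - y) \<in> H" using dH subgrp_diff[OF sH] by auto
      thus "g \<in> coset H x" unfolding coset_def by blast
    qed
  qed
  thus False using ne by simp
qed

lemma card_sumset_single: "finite A \<Longrightarrow> finite B \<Longrightarrow> A \<noteq> {} \<Longrightarrow> B \<noteq> {} \<Longrightarrow>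
  sqrt (real (card A) * real (card B)) \<le> real (card (sumset (sumset A B) {x::'a::ab_group_add}))"
proof -
  assume h: "finite A" "finite B" "A \<noteq> {}" "B \<noteq> {}"
  have "card (sumset (sumset A B) {x}) = card (sumset A B)"
    by (simp add: sumset_singleton_right card_translate)
  moreover have "card A \<le> card (sumset A B)" using h by (intro card_sumset_ge_left)
  moreover have "card B \<le> card (sumset A B)" using h card_sumset_ge_left[of B A] by (simp add: sumset_comm)
  ultimately show ?thesis by (intro sqrt_le_of_both) auto
qed

lemma main_ineq:
  fixes U :: "'a::ab_group_add set"
  assumes "quasicube d U"
  shows "finite U \<and> card U = 2^d \<and> (\<forall>V A B. V \<subseteq> U \<longrightarrow> finite A \<longrightarrow> finite B \<longrightarrow> A \<noteq> {} \<longrightarrow> B \<noteq> {} \<longrightarrow>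
     real (card V) * sqrt (real (card A) * real (card B)) \<le> real (card (sumset (sumset A B) V)))"
  using assms
proof (induction rule: quasicube.induct)
  case (qc0 x)
  have "\<forall>V A B. V \<subseteq> {x} \<longrightarrow> finite A \<longrightarrow> finite B \<longrightarrow> A \<noteq> {} \<longrightarrow> B \<noteq> {} \<longrightarrow>
     real (card V) * sqrt (real (card A) * real (card B)) \<le> real (card (sumset (sumset A B) V))"
  proof (intro allI impI)
    fix V A B :: "'a set" assume h: "V \<subseteq> {x}" "finite A" "finite B" "A \<noteq> {}" "B \<noteq> {}"
    show "real (card V) * sqrt (real (card A) * real (card B)) \<le> real (card (sumset (sumset A B) V))"
    proof (cases "V = {}")
      case True thus ?thesis by simp
    next
      case False
      hence "V = {x}" using h by auto
      thus ?thesis using card_sumset_single[OF h(2-5)] by simp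
    qed
  qed
  thus ?case by simp
next
  case (qcSuc U H x y d)
  note fU = qcSuc.hyps(1) and sH = qcSuc.hyps(2) and ne = qcSuc.hyps(4) and Usub = qcSuc.hyps(5)
    and io = qcSuc.hyps(8) and IHx = qcSuc.IH(1) and IHy = qcSuc.IH(2)
  have disj: "coset H x \<inter> coset H y = {}" by (rule coset_disjoint[OF sH ne])
  have Ueq: "U = (U \<inter> coset H x) \<union> (U \<inter> coset H y)" using Usub by auto
  have "card U = card (U \<inter> coset H x) + card (U \<inter> coset H y)"
    using fU disj by (subst Ueq, intro card_Un_disjoint) auto
  hence cardU: "card U = 2 ^ Suc d" using IHx IHy by simp
  have ineq: "\<forall>V A B. V \<subseteq> U \<longrightarrow> finite A \<longrightarrow> finite B \<longrightarrow> A \<noteq> {} \<longrightarrow> B \<noteq> {} \<longrightarrow>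
     real (card V) * sqrt (real (card A) * real (card B)) \<le> real (card (sumset (sumset A B) V))"
  proof (intro allI impI)
    fix V A B :: "'a set" assume V: "V \<subseteq> U" and fA: "finite A" and fB: "finite B"
      and neA: "A \<noteq> {}" and neB: "B \<noteq> {}"
    define Vx where "Vx = V \<inter> coset H x"
    define Vy where "Vy = V \<inter> coset H y"
    have Veq: "V = Vx \<union> Vy" unfolding Vx_def Vy_def using V Usub by auto
    have fV: "finite V" using V fU finite_subset by auto
    show "real (card V) * sqrt (real (card A) * real (card B)) \<le> real (card (sumset (sumset A B) V))"
    proof (cases "Vx = {} \<or> Vy = {}")
      case True
      thus ?thesis
      proof
        assume "Vx = {}"
        hence "V \<subseteq> U \<inter> coset H y" using Veq V unfolding Vy_def by auto
        thus ?thesis using IHy fA fB neA neB by blast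
      next
        assume "Vy = {}"
        hence "V \<subseteq> U \<inter> coset H x" using Veq V unfolding Vx_def by auto
        thus ?thesis using IHx fA fB neA neB by blast
      qed
    next
      case False
      define tr where "tr = (\<lambda>v::'a. v + (- y))"
      define W0 where "W0 = tr ` Vy"
      define W1 where "W1 = tr ` Vx"
      have W0H: "W0 \<subseteq> H" unfolding W0_def tr_def Vy_def coset_def by auto
      have W1z: "W1 \<subseteq> coset H (x - y)" unfolding W1_def tr_def Vx_def coset_def
        by (auto simp: algebra_simps)
      have cW0: "card W0 = card Vy" unfolding W0_def tr_def by (rule card_translate)
      have cW1: "card W1 = card Vx" unfolding W1_def tr_def by (rule card_translate)
      have fVx: "finite Vx" "finite Vy" using fV unfolding Vx_def Vy_def by auto
      have hyp0: "real (card W0) * sqrt (real (card A') * real (card B')) \<le> real (card (sumset (sumset A' B') W0))"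
        if "finite A'" "finite B'" "A' \<noteq> {}" "B' \<noteq> {}" for A' B' :: "'a set"
      proof -
        have "Vy \<subseteq> U \<inter> coset H y" using V unfolding Vy_def by auto
        hence "real (card Vy) * sqrt (real (card A') * real (card B')) \<le> real (card (sumset (sumset A' B') Vy))"
          using IHy that by blast
        thus ?thesis unfolding cW0 unfolding W0_def tr_def card3_translate_W .
      qed
      have hyp1: "real (card W1) * sqrt (real (card A') * real (card B')) \<le> real (card (sumset (sumset A' B') W1))"
        if "finite A'" "finite B'" "A' \<noteq> {}" "B' \<noteq> {}" for A' B' :: "'a set"
      proof -
        have "Vx \<subseteq> U \<inter> coset H x" using V unfolding Vx_def by auto
        hence "real (card Vx) * sqrt (real (card A') * real (card B')) \<le> real (card (sumset (sumset A' B') Vx))"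
          using IHx that by blast
        thus ?thesis unfolding cW1 unfolding W1_def tr_def card3_translate_W .
      qed
      have "real (card (W0 \<union> W1)) * sqrt (real (card A) * real (card B))
         \<le> real (card (sumset (sumset A B) (W0 \<union> W1)))"
        by (rule step[OF sH io W0H W1z _ _ _ _ hyp0 hyp1 fA fB neA neB])
           (use fVx False in \<open>auto simp: W0_def W1_def\<close>)
      moreover have "W0 \<union> W1 = tr ` V" unfolding W0_def W1_def using Veq by auto
      ultimately have "real (card (tr ` V)) * sqrt (real (card A) * real (card B))
         \<le> real (card (sumset (sumset A B) (tr ` V)))" by simp
      thus ?thesis unfolding tr_def card3_translate_W card_translate .
    qed
  qed
  show ?case using fU cardU ineq by blast
qed

lemma sumset_insert_right: "sumset A (insert c C) = sumset A C \<union> (\<lambda>g. g + c) ` A"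
  unfolding sumset_def by auto

lemma petridis:
  fixes X B :: "'a::ab_group_add set"
  assumes fX: "finite X" and fB: "finite B"
    and minX: "\<And>Y. Y \<subseteq> X \<Longrightarrow> Y \<noteq> {} \<Longrightarrow>
       real (card (sumset X B)) * real (card Y) \<le> real (card (sumset Y B)) * real (card X)"
    and fC: "finite C"
  shows "real (card (sumset (sumset X B) C)) * real (card X)
         \<le> real (card (sumset X B)) * real (card (sumset X C))"
  using fC
proof (induction C rule: finite_induct)
  case empty
  then show ?case by simp
next
  case (insert c C)
  define P where "P = sumset (sumset X B) C"
  define Q where "Q = (\<lambda>g. g + c) ` sumset X B"
  define Z where "Z = {x\<in>X. \<forall>b\<in>B. x + b + c \<in> P}"
  define Q' where "Q' = (\<lambda>g. g + c) ` sumset Z B"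
  define Wc where "Wc = {x\<in>X. x + c \<in> sumset X C}"
  have fXB: "finite (sumset X B)" using fX fB by (rule finite_sumset)
  have fP: "finite P" unfolding P_def using fXB insert.hyps(1) by (rule finite_sumset)
  have fQ: "finite Q" unfolding Q_def using fXB by simp
  have ZX: "Z \<subseteq> X" unfolding Z_def by auto
  have Q'Q: "Q' \<subseteq> Q" unfolding Q'_def Q_def using ZX by (intro image_mono sumset_mono) auto
  have Q'P: "Q' \<subseteq> P"
  proof
    fix g assume "g \<in> Q'"
    then obtain u where "u \<in> sumset Z B" "g = u + c" unfolding Q'_def by auto
    then obtain x b where "x \<in> Z" "b \<in> B" "g = x + b + c" by (metis sumsetE)
    thus "g \<in> P" unfolding Z_def by auto
  qed
  have un1: "sumset (sumset X B) (insert c C) = P \<union> Q"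
    unfolding P_def Q_def by (rule sumset_insert_right)
  have "card (P \<union> Q) \<le> card P + card (Q - Q')"
  proof -
    have "P \<union> Q = P \<union> (Q - Q')" using Q'P by auto
    hence "card (P \<union> Q) = card (P \<union> (Q - Q'))" by simp
    also have "\<dots> \<le> card P + card (Q - Q')" by (rule card_Un_le)
    finally show ?thesis .
  qed
  moreover have "card (Q - Q') = card Q - card Q'" using Q'Q fQ by (intro card_Diff_subset) (auto intro: finite_subset)
  moreover have "card Q' \<le> card Q" using Q'Q fQ by (intro card_mono)
  ultimately have c1: "real (card (P \<union> Q)) \<le> real (card P) + real (card Q) - real (card Q')" by simp
  have cQ: "card Q = card (sumset X B)" unfolding Q_def by (rule card_translate)
  have cQ': "card Q' = card (sumset Z B)" unfolding Q'_def by (rule card_translate)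
  have zmin: "real (card (sumset X B)) * real (card Z) \<le> real (card (sumset Z B)) * real (card X)"
  proof (cases "Z = {}")
    case True thus ?thesis by simp
  next
    case False thus ?thesis using minX[OF ZX] by simp
  qed
  have WcZ: "Wc \<subseteq> Z"
  proof
    fix x assume "x \<in> Wc"
    hence x: "x \<in> X" "x + c \<in> sumset X C" unfolding Wc_def by auto
    then obtain x' c' where "x' \<in> X" "c' \<in> C" "x + c = x' + c'" by (metis sumsetE)
    have "\<forall>b\<in>B. x + b + c \<in> P"
    proof
      fix b assume "b \<in> B"
      have eq: "x + b + c = (x' + b) + c'" using \<open>x + c = x' + c'\<close> by (simp add: algebra_simps)
      have "x' + b \<in> sumset X B" using \<open>x' \<in> X\<close> \<open>b \<in> B\<close> by (rule sumsetI)
      hence "(x' + b) + c' \<in> P" unfolding P_def using \<open>c' \<in> C\<close> by (rule sumsetI)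
      thus "x + b + c \<in> P" unfolding eq .
    qed
    thus "x \<in> Z" unfolding Z_def using x by auto
  qed
  have fZ: "finite Z" using ZX fX finite_subset by auto
  have cardXC: "real (card (sumset X (insert c C))) = real (card (sumset X C)) + real (card X) - real (card Wc)"
  proof -
    define D where "D = (\<lambda>x. x + c) ` (X - Wc)"
    have "sumset X (insert c C) = sumset X C \<union> D"
      unfolding sumset_insert_right D_def Wc_def by auto
    moreover have "sumset X C \<inter> D = {}" unfolding D_def Wc_def by auto
    moreover have "finite (sumset X C)" using fX insert.hyps(1) by (rule finite_sumset)
    moreover have "finite D" unfolding D_def using fX by simp
    ultimately have "card (sumset X (insert c C)) = card (sumset X C) + card D"
      by (simp add: card_Un_disjoint)
    moreover have "card D = card (X - Wc)" unfolding D_def by (rule card_translate)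
    moreover have "card (X - Wc) = card X - card Wc" using fX by (intro card_Diff_subset) (auto simp: Wc_def intro: finite_subset)
    moreover have "card Wc \<le> card X" using fX by (intro card_mono) (auto simp: Wc_def)
    ultimately show ?thesis by simp
  qed
  have cWcZ: "real (card Wc) \<le> real (card Z)" using WcZ fZ by (simp add: card_mono)
  have IH: "real (card P) * real (card X) \<le> real (card (sumset X B)) * real (card (sumset X C))"
    using insert.IH unfolding P_def .
  have "real (card (P \<union> Q)) * real (card X)
      \<le> (real (card P) + real (card Q) - real (card Q')) * real (card X)"
    using c1 by (intro mult_right_mono) auto
  also have "\<dots> = real (card P) * real (card X) + real (card (sumset X B)) * real (card X)
      - real (card (sumset Z B)) * real (card X)" unfolding cQ cQ' by (simp add: algebra_simps)
  also have "\<dots> \<le> real (card (sumset X B)) * real (card (sumset X C)) + real (card (sumset X B)) * real (card X)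
      - real (card (sumset X B)) * real (card Z)" using IH zmin by linarith
  also have "\<dots> = real (card (sumset X B)) * (real (card (sumset X C)) + real (card X) - real (card Z))"
    by (simp add: algebra_simps)
  also have "\<dots> \<le> real (card (sumset X B)) * real (card (sumset X (insert c C)))"
    unfolding cardXC using cWcZ by (intro mult_left_mono) auto
  finally show ?case unfolding un1 .
qed

lemma ex_min_subset:
  fixes A B :: "'a::ab_group_add set"
  assumes fA: "finite A" and neA: "A \<noteq> {}"
  shows "\<exists>X. X \<subseteq> A \<and> X \<noteq> {} \<and> (\<forall>Y. Y \<subseteq> A \<longrightarrow> Y \<noteq> {} \<longrightarrow>
          real (card (sumset X B)) / real (card X) \<le> real (card (sumset Y B)) / real (card Y))"
proof -
  define S where "S = {Y. Y \<subseteq> A \<and> Y \<noteq> {}}"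
  define f where "f = (\<lambda>Y. real (card (sumset Y B)) / real (card Y))"
  have fS: "finite S" unfolding S_def using fA by simp
  have neS: "S \<noteq> {}" unfolding S_def using neA by auto
  have "Min (f ` S) \<in> f ` S" using fS neS by simp
  then obtain X where X: "X \<in> S" "f X = Min (f ` S)" by auto
  have "\<forall>Y\<in>S. f X \<le> f Y" unfolding X(2) using fS by simp
  thus ?thesis using X(1) unfolding S_def f_def by blast
qed

lemma alpha_half:
  fixes V A B :: "'a::ab_group_add set"
  assumes MI: "\<And>A B. finite A \<Longrightarrow> finite B \<Longrightarrow> A \<noteq> {} \<Longrightarrow> B \<noteq> {} \<Longrightarrow>
       real (card V) * sqrt (real (card A) * real (card B)) \<le> real (card (sumset (sumset A B) V))"
    and fA: "finite A" and fB: "finite B" and neA: "A \<noteq> {}" and neB: "B \<noteq> {}" and VB: "V \<subseteq> B"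
  shows "real (card V) * real (card A) * sqrt (real (card A) * real (card B)) \<le> real (card (sumset A B))^2"
proof -
  obtain X where X: "X \<subseteq> A" "X \<noteq> {}" and Xmin: "\<forall>Y. Y \<subseteq> A \<longrightarrow> Y \<noteq> {} \<longrightarrow>
          real (card (sumset X B)) / real (card X) \<le> real (card (sumset Y B)) / real (card Y)"
    using ex_min_subset[OF fA neA, of B] by auto
  have fX: "finite X" using X fA finite_subset by auto
  have cXpos: "0 < real (card X)" using fX X by (simp add: card_gt_0_iff)
  have minX: "real (card (sumset X B)) * real (card Y) \<le> real (card (sumset Y B)) * real (card X)"
    if "Y \<subseteq> X" "Y \<noteq> {}" for Y
  proof -
    have "Y \<subseteq> A" using that X by auto
    hence r: "real (card (sumset X B)) / real (card X) \<le> real (card (sumset Y B)) / real (card Y)"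
      using Xmin that by blast
    have "finite Y" using that fX finite_subset by auto
    hence "0 < real (card Y)" using that by (simp add: card_gt_0_iff)
    thus ?thesis using r cXpos by (simp add: field_simps)
  qed
  have P: "real (card (sumset (sumset X B) B)) * real (card X)
         \<le> real (card (sumset X B)) * real (card (sumset X B))"
    by (rule petridis[OF fX fB minX fB])
  have "real (card V) * sqrt (real (card X) * real (card B)) \<le> real (card (sumset (sumset X B) V))"
    using MI fX fB X neB by blast
  also have "card (sumset (sumset X B) V) \<le> card (sumset (sumset X B) B)"
    using VB fX fB by (intro card_mono finite_sumset sumset_mono) auto
  finally have M: "real (card V) * sqrt (real (card X) * real (card B)) \<le> real (card (sumset (sumset X B) B))"
    by simp
  have AX: "real (card (sumset X B)) * real (card A) \<le> real (card (sumset A B)) * real (card X)"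
  proof -
    have r: "real (card (sumset X B)) / real (card X) \<le> real (card (sumset A B)) / real (card A)"
      using Xmin neA by blast
    have "0 < real (card A)" using fA neA by (simp add: card_gt_0_iff)
    thus ?thesis using r cXpos by (simp add: field_simps)
  qed
  define v where "v = real (card V)"
  define x where "x = real (card X)"
  define a where "a = real (card A)"
  define b where "b = real (card B)"
  define t where "t = real (card (sumset X B))"
  define s where "s = real (card (sumset A B))"
  define u where "u = real (card (sumset (sumset X B) B))"
  have xa: "x \<le> a" unfolding x_def a_def using X fA by (simp add: card_mono)
  have x0: "0 < x" unfolding x_def using cXpos .
  have pos: "0 \<le> v" "0 \<le> b" "0 \<le> t" "0 \<le> s" unfolding v_def b_def t_def s_def by auto
  have h1: "v * sqrt (x * b) * x \<le> t * t" using M P unfolding v_def x_def b_def t_def u_def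
    using cXpos by (smt (verit) mult_right_mono of_nat_0_le_iff)
  have h2: "t * a \<le> s * x" using AX unfolding t_def a_def s_def x_def .
  have h3: "(t * a) * (t * a) \<le> (s * x) * (s * x)"
    by (rule mult_mono[OF h2 h2]) (use pos x0 xa in auto)
  have "v * sqrt (x * b) * x * (a * a) \<le> (t * t) * (a * a)" using h1 by (intro mult_right_mono) auto
  also have "\<dots> \<le> (s * s) * (x * x)" using h3 by (simp add: ac_simps)
  finally have h4: "v * sqrt (x * b) * (a * a) \<le> (s * s) * x" using x0
    by (simp add: ac_simps)
  have h5: "v * a * sqrt (a * b) * x \<le> v * sqrt (x * b) * (a * a)"
  proof -
    have sq: "sqrt x \<le> sqrt a" using xa by simp
    have f1: "sqrt x * (sqrt x * sqrt a) \<le> sqrt a * (sqrt x * sqrt a)" using sq x0 xa by (intro mult_right_mono) auto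
    have e1: "sqrt x * sqrt x = x" using x0 by simp
    have e2: "sqrt a * sqrt a = a" using x0 xa by simp
    have f2': "sqrt x * (sqrt x * sqrt a) = (sqrt x * sqrt x) * sqrt a" by (simp only: mult.assoc)
    have f2: "sqrt x * (sqrt x * sqrt a) = x * sqrt a" unfolding f2' e1 ..
    have f3': "sqrt a * (sqrt x * sqrt a) = (sqrt a * sqrt a) * sqrt x" by (simp only: ac_simps)
    have f3: "sqrt a * (sqrt x * sqrt a) = a * sqrt x" unfolding f3' e2 ..
    have "a * sqrt x \<ge> x * sqrt a" using f1 unfolding f2 f3 .
    hence "sqrt b * (a * sqrt x) \<ge> sqrt b * (x * sqrt a)" using pos by (intro mult_left_mono) auto
    hence "v * a * (sqrt b * (a * sqrt x)) \<ge> v * a * (sqrt b * (x * sqrt a))"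
      by (rule mult_left_mono) (use pos xa x0 in auto)
    thus ?thesis by (simp add: real_sqrt_mult ac_simps)
  qed
  have "v * a * sqrt (a * b) * x \<le> (s * s) * x" using h4 h5 by linarith
  hence "v * a * sqrt (a * b) \<le> s * s" using x0 by simp
  thus ?thesis unfolding v_def a_def b_def s_def by (simp add: power2_eq_square)
qed

lemma alpha_bound:
  fixes V A B :: "'a::ab_group_add set"
  assumes MI: "\<And>A B. finite A \<Longrightarrow> finite B \<Longrightarrow> A \<noteq> {} \<Longrightarrow> B \<noteq> {} \<Longrightarrow>
       real (card V) * sqrt (real (card A) * real (card B)) \<le> real (card (sumset (sumset A B) V))"
    and fA: "finite A" and fB: "finite B" and neA: "A \<noteq> {}" and neB: "B \<noteq> {}"
    and VA: "V \<subseteq> A" and VB: "V \<subseteq> B"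
  shows "sqrt (real (card V)) \<le> real (card (sumset A B)) / sqrt (real (card A) * real (card B))"
proof -
  define v where "v = real (card V)"
  define a where "a = real (card A)"
  define b where "b = real (card B)"
  define s where "s = real (card (sumset A B))"
  have a0: "0 < a" unfolding a_def using fA neA by (simp add: card_gt_0_iff)
  have b0: "0 < b" unfolding b_def using fB neB by (simp add: card_gt_0_iff)
  have v0: "0 \<le> v" unfolding v_def by simp
  have s0: "0 \<le> s" unfolding s_def by simp
  have h1: "v * a * sqrt (a * b) \<le> s^2" unfolding v_def a_def b_def s_def
    by (rule alpha_half[OF MI fA fB neA neB VB])
  have h2: "v * b * sqrt (b * a) \<le> s^2" unfolding v_def a_def b_def s_def
    using alpha_half[OF MI fB fA neB neA VA] by (simp add: sumset_comm[of B A])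
  have "sqrt ((v * a * sqrt (a * b)) * (v * b * sqrt (b * a))) \<le> s^2"
    using h1 h2 a0 b0 v0 by (intro sqrt_le_of_both) auto
  moreover have "(v * a * sqrt (a * b)) * (v * b * sqrt (b * a)) = (v * a * b) * (v * a * b)"
  proof -
    have "sqrt (a * b) * sqrt (b * a) = a * b" using a0 b0 by (simp add: ac_simps)
    thus ?thesis by (simp add: ac_simps)
  qed
  ultimately have "v * a * b \<le> s^2" using a0 b0 v0 by simp
  hence "sqrt (v * (a * b)) \<le> sqrt (s^2)" by (intro real_sqrt_le_mono) (simp add: ac_simps)
  hence "sqrt v * sqrt (a * b) \<le> s" using s0 by (simp add: real_sqrt_mult)
  moreover have "0 < sqrt (a * b)" using a0 b0 by simp
  ultimately show ?thesis unfolding v_def a_def b_def s_def by (simp add: field_simps)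
qed

lemma sumset_zero_left: "sumset {0} V = (V::'a::ab_group_add set)"
  unfolding sumset_def by auto

theorem mainTheorem1:
  fixes U :: "'a::ab_group_add set" and d :: nat
  assumes "quasicube d U"
  shows "(\<forall>V. V \<subseteq> U \<longrightarrow> beta V = real (card V) \<and> alpha V \<ge> sqrt (real (card V)))
         \<and> beta U = 2 ^ d \<and> alpha U \<ge> 2 powr (real d / 2)"
proof -
  have MI0: "finite U \<and> card U = 2^d \<and> (\<forall>V A B. V \<subseteq> U \<longrightarrow> finite A \<longrightarrow> finite B \<longrightarrow> A \<noteq> {} \<longrightarrow> B \<noteq> {} \<longrightarrow>
     real (card V) * sqrt (real (card A) * real (card B)) \<le> real (card (sumset (sumset A B) V)))"
    by (rule main_ineq[OF assms])
  hence fU: "finite U" and cU: "card U = 2^d" by auto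
  have part: "beta V = real (card V) \<and> alpha V \<ge> sqrt (real (card V))" if VU: "V \<subseteq> U" for V
  proof
    have MI: "\<And>A B. finite A \<Longrightarrow> finite B \<Longrightarrow> A \<noteq> {} \<Longrightarrow> B \<noteq> {} \<Longrightarrow>
       real (card V) * sqrt (real (card A) * real (card B)) \<le> real (card (sumset (sumset A B) V))"
      using MI0 VU by blast
    have fV: "finite V" using VU fU finite_subset by auto
    show "beta V = real (card V)"
      unfolding beta_def
    proof (rule cInf_eq_minimum)
      have "real (card (sumset (sumset {0} {0}) V)) / sqrt (real (card {0::'a}) * real (card {0::'a})) = real (card V)"
        by (simp add: sumset_zero_left)
      thus "real (card V) \<in> {real (card (sumset (sumset A B) V)) / sqrt (real (card A) * real (card B)) |A B.
          finite A \<and> finite B \<and> A \<noteq> {} \<and> B \<noteq> {}}"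
        by (intro CollectI exI[of _ "{0::'a}"]) auto
    next
      fix r assume "r \<in> {real (card (sumset (sumset A B) V)) / sqrt (real (card A) * real (card B)) |A B.
          finite A \<and> finite B \<and> A \<noteq> {} \<and> B \<noteq> {}}"
      then obtain A B where AB: "finite A" "finite B" "A \<noteq> {}" "B \<noteq> {}"
        and r: "r = real (card (sumset (sumset A B) V)) / sqrt (real (card A) * real (card B))" by blast
      have "0 < sqrt (real (card A) * real (card B))" using AB by (simp add: card_gt_0_iff)
      thus "real (card V) \<le> r" unfolding r using MI[OF AB] by (simp add: field_simps)
    qed
    show "alpha V \<ge> sqrt (real (card V))"
      unfolding alpha_def
    proof (rule cInf_greatest)
      show "{real (card (sumset A B)) / sqrt (real (card A) * real (card B)) |A B.
          finite A \<and> finite B \<and> A \<noteq> {} \<and> B \<noteq> {} \<and> V \<subseteq> A \<and> V \<subseteq> B} \<noteq> {}"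
        using fV by (intro ex_in_conv[THEN iffD1] exI[of _ "real (card (sumset (insert 0 V) (insert 0 V))) / sqrt (real (card (insert 0 V)) * real (card (insert 0 V)))"]) blast
    next
      fix r assume "r \<in> {real (card (sumset A B)) / sqrt (real (card A) * real (card B)) |A B.
          finite A \<and> finite B \<and> A \<noteq> {} \<and> B \<noteq> {} \<and> V \<subseteq> A \<and> V \<subseteq> B}"
      then obtain A B where AB: "finite A" "finite B" "A \<noteq> {}" "B \<noteq> {}" "V \<subseteq> A" "V \<subseteq> B"
        and r: "r = real (card (sumset A B)) / sqrt (real (card A) * real (card B))" by blast
      show "sqrt (real (card V)) \<le> r" unfolding r by (rule alpha_bound[OF MI AB])
    qed
  qed
  have bU: "beta U = 2 ^ d" using part[of U] cU by simp
  have "alpha U \<ge> sqrt (real (card U))" using part[of U] by simp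
  moreover have "sqrt (real (card U)) = 2 powr (real d / 2)"
  proof -
    have "real (card U) = 2 powr (real d)" using cU by (simp add: powr_realpow)
    hence "sqrt (real (card U)) = (2 powr (real d)) powr (1/2)" by (simp add: powr_half_sqrt)
    also have "\<dots> = 2 powr (real d / 2)" by (simp add: powr_powr)
    finally show ?thesis .
  qed
  ultimately have aU: "alpha U \<ge> 2 powr (real d / 2)" by simp
  show ?thesis using part bU aU by blast
qed

end
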